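(* If $\gamma=0$, then for $u_1,\dots,u_n\in\mathcal B$, $R_n[X(u_1),\dots,X(u_n)]=\langle a^-(u_1)a^0(u_2)\cdots a^0(u_{n-1})a^+(u_n)\Omega,\Omega\rangle_{\gamma,\phi}$.
   Context: Let $\mathcal B$ be a unital $*$-algebra with star-linear maps $\phi:\mathcal B\to\mathbb C$, $\gamma:\mathcal B\to\mathcal B$, $\Lambda:\mathcal B\otimes_{alg}\mathcal B\to\mathcal B$, where $\phi$ is positive and faithful and $\gamma+\phi$ is completely positive, with $(\gamma+\phi)[b]:=\gamma[b]+\phi[b]1_{\mathcal B}$. Assume $\phi[v^*\Lambda(b\otimes u)]=\phi[\Lambda(b^*\otimes v)^*u]$ and $\gamma[v^*\Lambda(b\otimes u)]=\gamma[\Lambda(b^*\otimes v)^*u]$ for all $b,u,v$. On $\mathcal F_{alg}(\mathcal B)=\mathbb C\Omega\oplus\bigoplus_{n\ge1}\mathcal B^{\otimes n}$ use the form $\langle\Omega,\Omega\rangle_{\gamma,\phi}=1$, $\langle u_1\otimes\cdots\otimes u_n,v_1\otimes\cdots\otimes v_k\rangle_{\gamma,\phi}=\delta_{n=k}\phi[v_n^*(\gamma+\phi)[v_{n-1}^*\cdots(\gamma+\phi)[v_1^*u_1]\cdots u_{n-1}]u_n]$. For $b\in\mathcal B$: $a^+(b)\Omega=b$, $a^+(b)(u_1\otimes\cdots\otimes u_n)=b\otimes u_1\otimes\cdots\otimes u_n$; $a^-(b)\Omega=0$, $a^-(b)u_1=\phi[bu_1]\Omega$, $a^-(b)(u_1\otimes\cdots\otimes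 u_n)=(\gamma+\phi)[bu_1]u_2\otimes\cdots\otimes u_n$ ($n\ge2$); $a^0(b)\Omega=0$, $a^0(b)(u_1\otimes\cdots\otimes u_n)=\Lambda(b\otimes u_1)\otimes u_2\otimes\cdots\otimes u_n$; $X(b)=a^+(b)+a^-(b)+a^0(b)$. Free cumulants $R_k$ with respect to $\psi(A)=\langle A\Omega,\Omega\rangle_{\gamma,\phi}$ are defined by $\psi[Y_1\cdots Y_n]=\sum_{\pi\in\mathrm{NC}(n)}\prod_{V\in\pi}R_{|V|}[Y_{V(1)},\dots,Y_{V(|V|)}]$, $\mathrm{NC}(n)$ the noncrossing partitions of $\{1,\dots,n\}$. *)

theory Defs
  imports Complex_Main "HOL-Library.Disjoint_Sets" "HOL-Library.Complex_Order"
begin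

class unital_star_algebra = ring_1 +
  fixes scaleC :: "complex \<Rightarrow> 'a \<Rightarrow> 'a"
    and adj :: "'a \<Rightarrow> 'a"
  assumes scaleC_add_right: "scaleC c (x + y) = scaleC c x + scaleC c y"
    and scaleC_add_left: "scaleC (c + d) x = scaleC c x + scaleC d x"
    and scaleC_scaleC: "scaleC c (scaleC d x) = scaleC (c * d) x"
    and scaleC_one: "scaleC 1 x = x"
    and scaleC_left_mult: "scaleC c x * y = scaleC c (x * y)"
    and scaleC_right_mult: "x * scaleC c y = scaleC c (x * y)"
    and adj_adj: "adj (adj x) = x"
    and adj_add: "adj (x + y) = adj x + adj y"
    and adj_mult: "adj (x * y) = adj y * adj x"
    and adj_scaleC: "adj (scaleC c x) = scaleC (cnj c) (adj x)"

definition lin_functional :: "('b::unital_star_algebra \<Rightarrow> complex) \<Rightarrow> bool" where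
  "lin_functional f \<longleftrightarrow> (\<forall>x y. f (x + y) = f x + f y) \<and> (\<forall>c x. f (scaleC c x) = c * f x)"

definition lin_map :: "('b::unital_star_algebra \<Rightarrow> 'b) \<Rightarrow> bool" where
  "lin_map f \<longleftrightarrow> (\<forall>x y. f (x + y) = f x + f y) \<and> (\<forall>c x. f (scaleC c x) = scaleC c (f x))"

text \<open>A linear map on the algebraic tensor product B (x) B is the same as a bilinear map.\<close>
definition bilin_map :: "('b::unital_star_algebra \<Rightarrow> 'b \<Rightarrow> 'b) \<Rightarrow> bool" where
  "bilin_map L \<longleftrightarrow> (\<forall>y. lin_map (\<lambda>x. L x y)) \<and> (\<forall>x. lin_map (\<lambda>y. L x y))"

definition star_lin_functional :: "('b::unital_star_algebra \<Rightarrow> complex) \<Rightarrow> bool" where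
  "star_lin_functional f \<longleftrightarrow> lin_functional f \<and> (\<forall>x. f (adj x) = cnj (f x))"

definition star_lin_map :: "('b::unital_star_algebra \<Rightarrow> 'b) \<Rightarrow> bool" where
  "star_lin_map f \<longleftrightarrow> lin_map f \<and> (\<forall>x. f (adj x) = adj (f x))"

text \<open>Star on B (x) B is (b (x) c)* = b* (x) c*.\<close>
definition star_bilin_map :: "('b::unital_star_algebra \<Rightarrow> 'b \<Rightarrow> 'b) \<Rightarrow> bool" where
  "star_bilin_map L \<longleftrightarrow> bilin_map L \<and> (\<forall>x y. L (adj x) (adj y) = adj (L x y))"

definition positive_functional :: "('b::unital_star_algebra \<Rightarrow> complex) \<Rightarrow> bool" where
  "positive_functional f \<longleftrightarrow> (\<forall>b. 0 \<le> f (adj b * b))"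

definition faithful_functional :: "('b::unital_star_algebra \<Rightarrow> complex) \<Rightarrow> bool" where
  "faithful_functional f \<longleftrightarrow> (\<forall>b. f (adj b * b) = 0 \<longrightarrow> b = 0)"

text \<open>Complete positivity: for all n and b_1..b_n the matrix [T(b_i* b_j)] in M_n(B)
  is a finite sum of elements A*A, A in M_n(B) (algebraic positivity).\<close>
definition completely_positive :: "('b::unital_star_algebra \<Rightarrow> 'b) \<Rightarrow> bool" where
  "completely_positive T \<longleftrightarrow>
     (\<forall>(n::nat) (b::nat \<Rightarrow> 'b). \<exists>(m::nat) (A::nat \<Rightarrow> nat \<Rightarrow> nat \<Rightarrow> 'b).
        \<forall>i<n. \<forall>j<n. T (adj (b i) * b j) = (\<Sum>l<m. \<Sum>k<n. adj (A l k i) * A l k j))"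

definition gp :: "('b::unital_star_algebra \<Rightarrow> 'b) \<Rightarrow> ('b \<Rightarrow> complex) \<Rightarrow> 'b \<Rightarrow> 'b" where
  "gp \<gamma> \<phi> b = \<gamma> b + scaleC (\<phi> b) 1"

text \<open>Elements of F_alg(B) are represented as formal finite linear combinations of
  words: the empty word is Omega, the word [u1,...,un] is u1 (x) ... (x) un.\<close>
type_synonym 'b fvec = "(complex \<times> 'b list) list"

definition Omega :: "'b fvec" where
  "Omega = [(1, [])]"

fun kern_fold :: "('b::unital_star_algebra \<Rightarrow> 'b) \<Rightarrow> 'b \<Rightarrow> ('b \<times> 'b) list \<Rightarrow> 'b" where
  "kern_fold T x [] = x"
| "kern_fold T x ((u, v) # ps) = kern_fold T (adj v * T x * u) ps"

text \<open><u_1 .. u_n, v_1 .. v_k> = delta_{n=k} phi[v_n* (g+p)[ ... (g+p)[v_1* u_1] ... u_{n-1}] u_n]\<close>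
fun word_form :: "('b::unital_star_algebra \<Rightarrow> 'b) \<Rightarrow> ('b \<Rightarrow> complex) \<Rightarrow> 'b list \<Rightarrow> 'b list \<Rightarrow> complex" where
  "word_form \<gamma> \<phi> [] [] = 1"
| "word_form \<gamma> \<phi> (u # us) (v # vs) =
     (if length us = length vs
      then \<phi> (kern_fold (gp \<gamma> \<phi>) (adj v * u) (zip us vs)) else 0)"
| "word_form \<gamma> \<phi> _ _ = 0"

definition fock_form :: "('b::unital_star_algebra \<Rightarrow> 'b) \<Rightarrow> ('b \<Rightarrow> complex) \<Rightarrow> 'b fvec \<Rightarrow> 'b fvec \<Rightarrow> complex" where
  "fock_form \<gamma> \<phi> x y = (\<Sum>(c, w)\<leftarrow>x. \<Sum>(d, w')\<leftarrow>y. c * cnj d * word_form \<gamma> \<phi> w w')"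

definition lin_ext :: "('b list \<Rightarrow> 'b fvec) \<Rightarrow> 'b fvec \<Rightarrow> 'b fvec" where
  "lin_ext f x = concat (map (\<lambda>(c, w). map (\<lambda>(d, w'). (c * d, w')) (f w)) x)"

definition a_plus :: "'b \<Rightarrow> 'b fvec \<Rightarrow> 'b fvec" where
  "a_plus b = lin_ext (\<lambda>w. [(1, b # w)])"

fun a_minus_word :: "('b::unital_star_algebra \<Rightarrow> 'b) \<Rightarrow> ('b \<Rightarrow> complex) \<Rightarrow> 'b \<Rightarrow> 'b list \<Rightarrow> 'b fvec" where
  "a_minus_word \<gamma> \<phi> b [] = []"
| "a_minus_word \<gamma> \<phi> b [u] = [(\<phi> (b * u), [])]"
| "a_minus_word \<gamma> \<phi> b (u1 # u2 # us) = [(1, (gp \<gamma> \<phi> (b * u1) * u2) # us)]"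

definition a_minus :: "('b::unital_star_algebra \<Rightarrow> 'b) \<Rightarrow> ('b \<Rightarrow> complex) \<Rightarrow> 'b \<Rightarrow> 'b fvec \<Rightarrow> 'b fvec" where
  "a_minus \<gamma> \<phi> b = lin_ext (a_minus_word \<gamma> \<phi> b)"

fun a_zero_word :: "('b \<Rightarrow> 'b \<Rightarrow> 'b) \<Rightarrow> 'b \<Rightarrow> 'b list \<Rightarrow> 'b fvec" where
  "a_zero_word \<Lambda> b [] = []"
| "a_zero_word \<Lambda> b (u # us) = [(1, \<Lambda> b u # us)]"

definition a_zero :: "('b \<Rightarrow> 'b \<Rightarrow> 'b) \<Rightarrow> 'b \<Rightarrow> 'b fvec \<Rightarrow> 'b fvec" where
  "a_zero \<Lambda> b = lin_ext (a_zero_word \<Lambda> b)"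

text \<open>Sum of operators = concatenation of formal sums.\<close>
definition field_op :: "('b::unital_star_algebra \<Rightarrow> 'b) \<Rightarrow> ('b \<Rightarrow> complex) \<Rightarrow> ('b \<Rightarrow> 'b \<Rightarrow> 'b) \<Rightarrow> 'b \<Rightarrow> 'b fvec \<Rightarrow> 'b fvec" where
  "field_op \<gamma> \<phi> \<Lambda> b x = a_plus b x @ a_minus \<gamma> \<phi> b x @ a_zero \<Lambda> b x"

text \<open>Product Y_1 ... Y_n of operators (Y_n acts first).\<close>
definition op_prod :: "('v \<Rightarrow> 'v) list \<Rightarrow> 'v \<Rightarrow> 'v" where
  "op_prod Ys = foldr (\<circ>) Ys id"

definition vac_state :: "('b::unital_star_algebra \<Rightarrow> 'b) \<Rightarrow> ('b \<Rightarrow> complex) \<Rightarrow> ('b fvec \<Rightarrow> 'b fvec) \<Rightarrow> complex" where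
  "vac_state \<gamma> \<phi> A = fock_form \<gamma> \<phi> (A Omega) Omega"

definition NC :: "nat \<Rightarrow> nat set set set" where
  "NC n = {P. partition_on {0..<n} P \<and>
     (\<forall>V\<in>P. \<forall>W\<in>P. V \<noteq> W \<longrightarrow>
        \<not> (\<exists>a b c d. a < b \<and> b < c \<and> c < d \<and> a \<in> V \<and> c \<in> V \<and> b \<in> W \<and> d \<in> W))}"

text \<open>R (the list [Y_1..Y_k]) stands for R_k[Y_1,...,Y_k].  R is the family of free cumulants
  with respect to psi iff the moment-cumulant formula holds for all n >= 1 and all operators.\<close>
definition free_cumulants :: "(('v \<Rightarrow> 'v) \<Rightarrow> complex) \<Rightarrow> (('v \<Rightarrow> 'v) list \<Rightarrow> complex) \<Rightarrow> bool" where
  "free_cumulants \<psi> R \<longleftrightarrow>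
     (\<forall>Ys. Ys \<noteq> [] \<longrightarrow>
        \<psi> (op_prod Ys) =
          (\<Sum>P\<in>NC (length Ys). \<Prod>V\<in>P. R (map (\<lambda>i. Ys ! i) (sorted_list_of_set V))))"

end

theory Submission
  imports Defs
begin

definition lsum :: "('b list \<Rightarrow> complex) \<Rightarrow> 'b fvec \<Rightarrow> complex" where
  "lsum g x = (\<Sum>(c,w)\<leftarrow>x. c * g w)"

lemma lsum_Nil[simp]: "lsum g [] = 0" by (simp add: lsum_def)
lemma lsum_Cons[simp]: "lsum g ((c,w)#x) = c * g w + lsum g x" by (simp add: lsum_def)
lemma lsum_append[simp]: "lsum g (x @ y) = lsum g x + lsum g y" by (simp add: lsum_def)

lemma lsum_scale: "lsum g (map (\<lambda>(d, w'). (c * d, w')) ys) = c * lsum g ys"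
  by (induction ys) (auto simp: algebra_simps)

lemma lsum_lin_ext: "lsum g (lin_ext f x) = lsum (\<lambda>w. lsum g (f w)) x"
  by (induction x) (auto simp: lin_ext_def lsum_scale)

lemma lsum_add3: "lsum (\<lambda>w. a w + b w + d w) x = lsum a x + lsum b x + lsum d x"
  by (induction x) (auto simp: algebra_simps)

lemma lsum_single[simp]: "lsum g [(1,w)] = g w" by simp

lemma lsum_field_op: "lsum g (field_op \<gamma> \<phi> \<Lambda> u x) =
   lsum (\<lambda>w. g (u#w) + lsum g (a_minus_word \<gamma> \<phi> u w) + lsum g (a_zero_word \<Lambda> u w)) x"
  unfolding field_op_def a_plus_def a_minus_def a_zero_def
  by (simp add: lsum_lin_ext lsum_add3)

lemma fock_Omega: "fock_form \<gamma> \<phi> x Omega = lsum (\<lambda>w. if w = [] then 1 else 0) x"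
proof (induction x)
  case Nil then show ?case by (simp add: fock_form_def)
next
  case (Cons p x)
  obtain c w where p: "p = (c,w)" by force
  have "word_form \<gamma> \<phi> w [] = (if w = [] then 1 else 0)" by (cases w) auto
  then show ?case using Cons by (simp add: fock_form_def Omega_def p)
qed

lemma op_prod_append: "op_prod (xs @ ys) = op_prod xs \<circ> op_prod ys"
proof -
  have "\<And>g. foldr (\<circ>) xs g = foldr (\<circ>) xs id \<circ> g" by (induction xs) auto
  then show ?thesis by (simp add: op_prod_def)
qed

lemma op_prod_Nil[simp]: "op_prod [] = id" by (simp add: op_prod_def)
lemma op_prod_Cons[simp]: "op_prod (f#fs) = f \<circ> op_prod fs" by (simp add: op_prod_def)

abbreviation Xop where "Xop \<phi> \<Lambda> \<equiv> field_op (\<lambda>_. 0) \<phi> \<Lambda>"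

definition Mom :: "('b::unital_star_algebra \<Rightarrow> complex) \<Rightarrow> ('b \<Rightarrow> 'b \<Rightarrow> 'b) \<Rightarrow> 'b list \<Rightarrow> 'b list \<Rightarrow> complex" where
  "Mom \<phi> \<Lambda> us w = fock_form (\<lambda>_. 0) \<phi> (op_prod (map (Xop \<phi> \<Lambda>) us) [(1,w)]) Omega"

lemma Mom_Nil: "Mom \<phi> \<Lambda> [] w = (if w = [] then 1 else 0)"
  by (simp add: Mom_def fock_Omega)

lemma Mom_vac_and_snoc:
  "fock_form (\<lambda>_. 0) \<phi> (op_prod (map (Xop \<phi> \<Lambda>) us) x) Omega = lsum (Mom \<phi> \<Lambda> us) x"
  "Mom \<phi> \<Lambda> (us @ [u]) w = Mom \<phi> \<Lambda> us (u#w) + lsum (Mom \<phi> \<Lambda> us) (a_minus_word (\<lambda>_. 0) \<phi> u w)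
      + lsum (Mom \<phi> \<Lambda> us) (a_zero_word \<Lambda> u w)"
proof -
  have A: "\<And>x. fock_form (\<lambda>_. 0) \<phi> (op_prod (map (Xop \<phi> \<Lambda>) us) x) Omega = lsum (Mom \<phi> \<Lambda> us) x"
  proof (induction us rule: rev_induct)
    case Nil
    then show ?case by (simp add: fock_Omega Mom_def)
  next
    case (snoc u us)
    have M: "Mom \<phi> \<Lambda> (us @ [u]) w = Mom \<phi> \<Lambda> us (u#w) + lsum (Mom \<phi> \<Lambda> us) (a_minus_word (\<lambda>_. 0) \<phi> u w)
      + lsum (Mom \<phi> \<Lambda> us) (a_zero_word \<Lambda> u w)" for w
    proof -
      have "Mom \<phi> \<Lambda> (us @ [u]) w = fock_form (\<lambda>_. 0) \<phi> (op_prod (map (Xop \<phi> \<Lambda>) us) (Xop \<phi> \<Lambda> u [(1,w)])) Omega"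
        by (simp add: Mom_def op_prod_append)
      also have "\<dots> = lsum (Mom \<phi> \<Lambda> us) (Xop \<phi> \<Lambda> u [(1,w)])" by (rule snoc)
      finally show ?thesis by (simp add: lsum_field_op)
    qed
    show ?case using snoc[of "Xop \<phi> \<Lambda> u x"]
      by (simp add: op_prod_append lsum_field_op M)
  qed
  show "fock_form (\<lambda>_. 0) \<phi> (op_prod (map (Xop \<phi> \<Lambda>) us) x) Omega = lsum (Mom \<phi> \<Lambda> us) x" by (rule A)
  show "Mom \<phi> \<Lambda> (us @ [u]) w = Mom \<phi> \<Lambda> us (u#w) + lsum (Mom \<phi> \<Lambda> us) (a_minus_word (\<lambda>_. 0) \<phi> u w)
      + lsum (Mom \<phi> \<Lambda> us) (a_zero_word \<Lambda> u w)"
  proof -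
    have "Mom \<phi> \<Lambda> (us @ [u]) w = fock_form (\<lambda>_. 0) \<phi> (op_prod (map (Xop \<phi> \<Lambda>) us) (Xop \<phi> \<Lambda> u [(1,w)])) Omega"
      by (simp add: Mom_def op_prod_append)
    also have "\<dots> = lsum (Mom \<phi> \<Lambda> us) (Xop \<phi> \<Lambda> u [(1,w)])" by (rule A)
    finally show ?thesis by (simp add: lsum_field_op)
  qed
qed

lemma gp0_mult: "gp (\<lambda>_. 0) \<phi> b * y = scaleC (\<phi> b) y"
  by (simp add: gp_def scaleC_left_mult)

lemma Mom_scale:
  assumes lf: "lin_functional \<phi>" and bl: "bilin_map \<Lambda>"
  shows "Mom \<phi> \<Lambda> us (ws @ scaleC c y # r) = c * Mom \<phi> \<Lambda> us (ws @ y # r)"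
proof (induction us arbitrary: ws y r c rule: rev_induct)
  case Nil
  then show ?case by (simp add: Mom_Nil)
next
  case (snoc u us)
  have phs: "\<phi> (scaleC c x) = c * \<phi> x" for c x using lf by (simp add: lin_functional_def)
  have las: "\<Lambda> b (scaleC c x) = scaleC c (\<Lambda> b x)" for b c x
    using bl by (simp add: bilin_map_def lin_map_def)
  have sc: "scaleC a (scaleC c y) = scaleC c (scaleC a y)" for a c y
    by (simp add: scaleC_scaleC mult.commute)
  have M: "lsum (Mom \<phi> \<Lambda> us) (a_minus_word (\<lambda>_. 0) \<phi> u (ws @ scaleC c y # r)) =
        c * lsum (Mom \<phi> \<Lambda> us) (a_minus_word (\<lambda>_. 0) \<phi> u (ws @ y # r))"
  proof (cases ws)
    case Nil
    then show ?thesis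
    proof (cases r)
      case Nil
      then show ?thesis using \<open>ws = []\<close> by (simp add: scaleC_right_mult phs)
    next
      case (Cons y2 r')
      have "Mom \<phi> \<Lambda> us ([] @ scaleC (\<phi> (u * scaleC c y)) y2 # r') = c * Mom \<phi> \<Lambda> us ([] @ scaleC (\<phi> (u * y)) y2 # r')"
        using snoc[of "[]" "\<phi> (u * y)" y2 r'] snoc[of "[]" "\<phi> (u * scaleC c y)" y2 r']
        by (simp add: scaleC_right_mult phs)
      then show ?thesis using \<open>ws = []\<close> Cons by (simp add: gp0_mult)
    qed
  next
    case (Cons w1 ws')
    then show ?thesis
    proof (cases ws')
      case Nil
      have "Mom \<phi> \<Lambda> us ([] @ scaleC (\<phi> (u * w1)) (scaleC c y) # r) = c * Mom \<phi> \<Lambda> us ([] @ scaleC (\<phi> (u * w1)) y # r)"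
        using snoc[of "[]" c "scaleC (\<phi> (u * w1)) y" r] by (simp add: sc)
      then show ?thesis using Cons Nil by (simp add: gp0_mult)
    next
      case (Cons w2 ws'')
      show ?thesis using snoc[of "gp (\<lambda>_. 0) \<phi> (u * w1) * w2 # ws''" c y r] \<open>ws = w1 # ws'\<close> Cons by simp
    qed
  qed
  have Z: "lsum (Mom \<phi> \<Lambda> us) (a_zero_word \<Lambda> u (ws @ scaleC c y # r)) =
        c * lsum (Mom \<phi> \<Lambda> us) (a_zero_word \<Lambda> u (ws @ y # r))"
  proof (cases ws)
    case Nil
    then show ?thesis using snoc[of "[]" c "\<Lambda> u y" r] by (simp add: las)
  next
    case (Cons w1 ws')
    then show ?thesis using snoc[of "\<Lambda> u w1 # ws'" c y r] by simp
  qed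
  show ?case
    using snoc[of "u # ws" c y r] M Z
    by (simp add: Mom_vac_and_snoc(2) algebra_simps)
qed

lemma Mom_snoc_Nil: "Mom \<phi> \<Lambda> (us @ [u]) [] = Mom \<phi> \<Lambda> us [u]"
  by (simp add: Mom_vac_and_snoc(2))

lemma Mom_snoc_Cons:
  assumes lf: "lin_functional \<phi>" and bl: "bilin_map \<Lambda>"
  shows "Mom \<phi> \<Lambda> (us @ [u]) (x # r) = Mom \<phi> \<Lambda> us (u # x # r) + \<phi> (u * x) * Mom \<phi> \<Lambda> us r
     + Mom \<phi> \<Lambda> us (\<Lambda> u x # r)"
proof (cases r)
  case Nil
  then show ?thesis by (simp add: Mom_vac_and_snoc(2))
next
  case (Cons y r')
  then show ?thesis using Mom_scale[OF lf bl, of us "[]" "\<phi> (u * x)" y r']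
    by (simp add: Mom_vac_and_snoc(2) gp0_mult)
qed


section \<open>Partition combinatorics\<close>

definition crossfree :: "nat set set \<Rightarrow> bool" where
  "crossfree P \<longleftrightarrow> (\<forall>V\<in>P. \<forall>W\<in>P. V \<noteq> W \<longrightarrow>
        \<not> (\<exists>a b c d. a < b \<and> b < c \<and> c < d \<and> a \<in> V \<and> c \<in> V \<and> b \<in> W \<and> d \<in> W))"

lemma NC_iff: "P \<in> NC n \<longleftrightarrow> partition_on {0..<n} P \<and> crossfree P"
  unfolding NC_def crossfree_def by (rule mem_Collect_eq)

lemma crossfreeD: "crossfree P \<Longrightarrow> V \<in> P \<Longrightarrow> W \<in> P \<Longrightarrow> V \<noteq> W \<Longrightarrow> a < b \<Longrightarrow> b < c \<Longrightarrow> c < d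
   \<Longrightarrow> a \<in> V \<Longrightarrow> c \<in> V \<Longrightarrow> b \<in> W \<Longrightarrow> d \<in> W \<Longrightarrow> False"
  unfolding crossfree_def by (drule bspec, assumption, drule bspec, assumption, drule mp, assumption, erule notE, intro exI conjI)

lemma crossfreeI: "(\<And>V W a b c d. V \<in> P \<Longrightarrow> W \<in> P \<Longrightarrow> V \<noteq> W \<Longrightarrow> a < b \<Longrightarrow> b < c \<Longrightarrow> c < d
   \<Longrightarrow> a \<in> V \<Longrightarrow> c \<in> V \<Longrightarrow> b \<in> W \<Longrightarrow> d \<in> W \<Longrightarrow> False) \<Longrightarrow> crossfree P"
  unfolding crossfree_def by (intro ballI impI notI, elim exE conjE) metis

definition rem :: "nat \<Rightarrow> nat set set \<Rightarrow> nat set set" where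
  "rem m P = (\<lambda>V. V - {m}) ` P - {{}}"

definition addto :: "nat \<Rightarrow> nat set set \<Rightarrow> nat set \<Rightarrow> nat set set" where
  "addto m P C = insert (insert m C) (P - {C})"

definition blk :: "nat \<Rightarrow> nat set set \<Rightarrow> nat set" where
  "blk m P = \<Union>{V\<in>P. m \<in> V}"

lemma part_disj: "partition_on A P \<Longrightarrow> V \<in> P \<Longrightarrow> W \<in> P \<Longrightarrow> x \<in> V \<Longrightarrow> x \<in> W \<Longrightarrow> V = W"
  using disjointD[OF partition_onD2, of A P V W] by blast

lemma part_sub: "partition_on A P \<Longrightarrow> V \<in> P \<Longrightarrow> V \<subseteq> A"
  unfolding partition_on_def by blast

lemma part_ne: "partition_on A P \<Longrightarrow> V \<in> P \<Longrightarrow> V \<noteq> {}"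
  unfolding partition_on_def by blast

lemma part_ex: "partition_on A P \<Longrightarrow> x \<in> A \<Longrightarrow> \<exists>V\<in>P. x \<in> V"
  unfolding partition_on_def by blast

lemma part_blk: "partition_on A P \<Longrightarrow> V \<in> P \<Longrightarrow> m \<in> V \<Longrightarrow> blk m P = V"
proof -
  assume a: "partition_on A P" "V \<in> P" "m \<in> V"
  have "{W\<in>P. m \<in> W} = {V}" using part_disj[OF a(1) a(2) _ a(3)] a by blast
  then show ?thesis unfolding blk_def by simp
qed

lemma part_introI: "\<Union>P = A \<Longrightarrow> (\<And>V W x. V \<in> P \<Longrightarrow> W \<in> P \<Longrightarrow> x \<in> V \<Longrightarrow> x \<in> W \<Longrightarrow> V = W)
   \<Longrightarrow> {} \<notin> P \<Longrightarrow> partition_on A P"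
  by (rule partition_onI) (auto simp: disjnt_def)

lemma part_lt: "partition_on {0..<(m::nat)} P \<Longrightarrow> X \<in> P \<Longrightarrow> x \<in> X \<Longrightarrow> x < m"
proof -
  assume a: "partition_on {0..<m} P" "X \<in> P" "x \<in> X"
  have "X \<subseteq> {0..<m}" by (rule part_sub[OF a(1,2)])
  from subsetD[OF this a(3)] show "x < m" by simp
qed

lemma part_nm: "partition_on {0..<(m::nat)} P \<Longrightarrow> X \<in> P \<Longrightarrow> m \<notin> X"
proof
  assume "partition_on {0..<m} P" "X \<in> P" "m \<in> X"
  from part_lt[OF this] show False by simp
qed



lemma rem_part: assumes "partition_on {0..<Suc m} P" shows "partition_on {0..<m} (rem m P)"
proof (rule part_introI)
  show "\<Union> (rem m P) = {0..<m}"
  proof (rule set_eqI)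
    fix x
    show "x \<in> \<Union> (rem m P) \<longleftrightarrow> x \<in> {0..<m}"
    proof
      assume "x \<in> \<Union> (rem m P)"
      then obtain V0 where "V0 \<in> P" "x \<in> V0" "x \<noteq> m" unfolding rem_def by blast
      then show "x \<in> {0..<m}" using part_sub[OF assms \<open>V0 \<in> P\<close>] by auto
    next
      assume "x \<in> {0..<m}"
      then obtain V0 where "V0 \<in> P" "x \<in> V0" using part_ex[OF assms, of x] by auto
      then have "V0 - {m} \<in> rem m P" "x \<in> V0 - {m}" using \<open>x \<in> {0..<m}\<close> unfolding rem_def by auto
      then show "x \<in> \<Union> (rem m P)" by blast
    qed
  qed
  show "V = W" if vw: "V \<in> rem m P" "W \<in> rem m P" "x \<in> V" "x \<in> W" for V W x
  proof -
    obtain V0 where "V0 \<in> P" "V = V0 - {m}" using vw(1) unfolding rem_def by blast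
    obtain W0 where "W0 \<in> P" "W = W0 - {m}" using vw(2) unfolding rem_def by blast
    have "V0 = W0" using part_disj[OF assms \<open>V0 \<in> P\<close> \<open>W0 \<in> P\<close>, of x] vw(3,4) \<open>V = V0 - {m}\<close> \<open>W = W0 - {m}\<close> by simp
    then show ?thesis using \<open>V = V0 - {m}\<close> \<open>W = W0 - {m}\<close> by simp
  qed
  show "{} \<notin> rem m P" unfolding rem_def by blast
qed

lemma rem_cross: assumes "crossfree P" shows "crossfree (rem m P)"
proof (rule crossfreeI)
  fix V W a b c d assume "V \<in> rem m P" "W \<in> rem m P" "V \<noteq> W" and abcd: "a < b" "b < c" "c < d"
     "a \<in> V" "c \<in> V" "b \<in> W" "d \<in> W"
  obtain V0 where V0: "V0 \<in> P" "V = V0 - {m}" using \<open>V \<in> rem m P\<close> unfolding rem_def by blast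
  obtain W0 where W0: "W0 \<in> P" "W = W0 - {m}" using \<open>W \<in> rem m P\<close> unfolding rem_def by blast
  have "V0 \<noteq> W0" using \<open>V \<noteq> W\<close> V0 W0 by blast
  have "a \<in> V0" "c \<in> V0" "b \<in> W0" "d \<in> W0" using abcd V0 W0 by auto
  then show False using crossfreeD[OF assms V0(1) W0(1) \<open>V0 \<noteq> W0\<close> abcd(1-3)] by simp
qed

lemma addto_part: assumes "partition_on {0..<m} P" "C \<in> P" shows "partition_on {0..<Suc m} (addto m P C)"
proof (rule part_introI)
  have sub: "\<And>X. X \<in> P \<Longrightarrow> m \<notin> X" using part_nm[OF assms(1)] by simp
  show "\<Union> (addto m P C) = {0..<Suc m}"
  proof (rule set_eqI)
    fix x
    show "x \<in> \<Union> (addto m P C) \<longleftrightarrow> x \<in> {0..<Suc m}"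
    proof
      assume "x \<in> \<Union> (addto m P C)"
      then obtain V where "V \<in> addto m P C" "x \<in> V" by blast
      then have "x = m \<or> (\<exists>V0\<in>P. x \<in> V0)" using assms(2) unfolding addto_def by auto
      then show "x \<in> {0..<Suc m}" using part_sub[OF assms(1)] by fastforce
    next
      assume x: "x \<in> {0..<Suc m}"
      show "x \<in> \<Union> (addto m P C)"
      proof (cases "x = m")
        case True
        then show ?thesis unfolding addto_def by blast
      next
        case False
        then obtain V0 where "V0 \<in> P" "x \<in> V0" using part_ex[OF assms(1), of x] x by auto
        then show ?thesis unfolding addto_def by (cases "V0 = C") auto
      qed
    qed
  qed
  show "V = W" if vw: "V \<in> addto m P C" "W \<in> addto m P C" "x \<in> V" "x \<in> W" for V W x
  proof (cases "V = insert m C")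
    case True
    show ?thesis
    proof (rule ccontr)
      assume "V \<noteq> W"
      then have "W \<in> P" "W \<noteq> C" using vw(2) True unfolding addto_def by auto
      then have "x \<noteq> m" using sub vw(4) by blast
      then have "x \<in> C" using vw(3) True by simp
      then show False using part_disj[OF assms(1) assms(2) \<open>W \<in> P\<close> _ vw(4)] \<open>W \<noteq> C\<close> by simp
    qed
  next
    case False
    then have V: "V \<in> P" "V \<noteq> C" using vw(1) unfolding addto_def by auto
    then have "x \<noteq> m" using sub vw(3) by blast
    show ?thesis
    proof (cases "W = insert m C")
      case True
      then have "x \<in> C" using vw(4) \<open>x \<noteq> m\<close> by simp
      then show ?thesis using part_disj[OF assms(1) assms(2) V(1) _ vw(3)] V(2) by simp
    next
      case False
      then have "W \<in> P" using vw(2) unfolding addto_def by auto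
      then show ?thesis using part_disj[OF assms(1) V(1) _ vw(3) vw(4)] by simp
    qed
  qed
  show "{} \<notin> addto m P C" using part_ne[OF assms(1)] unfolding addto_def by blast
qed

lemma addsing_part: assumes "partition_on {0..<m} P" shows "partition_on {0..<Suc m} (insert {m} P)"
proof (rule part_introI)
  have sub: "\<And>X. X \<in> P \<Longrightarrow> m \<notin> X" using part_nm[OF assms(1)] by simp
  have "\<Union>P = {0..<m}" using assms unfolding partition_on_def by blast
  then show "\<Union> (insert {m} P) = {0..<Suc m}" by auto
  show "V = W" if vw: "V \<in> insert {m} P" "W \<in> insert {m} P" "x \<in> V" "x \<in> W" for V W x
  proof (cases "V = {m}")
    case True
    then have "x = m" using vw by simp
    then have "W = {m}" using vw(2,4) sub by blast
    then show ?thesis using True by simp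
  next
    case False
    then have V: "V \<in> P" using vw by simp
    then have "x \<noteq> m" using sub vw(3) by blast
    then have "W \<in> P" using vw by auto
    then show ?thesis using part_disj[OF assms(1) V _ vw(3) vw(4)] by simp
  qed
  show "{} \<notin> insert {m} P" using part_ne[OF assms(1)] by blast
qed

lemma addsing_cross: assumes "crossfree P" "partition_on {0..<m} P" shows "crossfree (insert {m} P)"
  unfolding crossfree_def
proof (intro ballI impI notI)
  fix V W assume V: "V \<in> insert {m} P" and W: "W \<in> insert {m} P" and "V \<noteq> W"
    and "\<exists>a b c d. a < b \<and> b < c \<and> c < d \<and> a \<in> V \<and> c \<in> V \<and> b \<in> W \<and> d \<in> W"
  then obtain a b c d where abcd: "a < b" "b < c" "c < d" "a \<in> V" "c \<in> V" "b \<in> W" "d \<in> W" by blast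
  have "V \<noteq> {m}" using abcd by auto
  moreover have "W \<noteq> {m}" using abcd by auto
  ultimately show False using crossfreeD[OF assms(1) _ _ \<open>V \<noteq> W\<close> abcd(1-3)] V W abcd(4-7) by blast
qed

lemma addto_cases: "V \<in> addto m P C \<Longrightarrow> V = insert m C \<or> (V \<in> P \<and> V \<noteq> C)"
  unfolding addto_def by blast

lemma addto_cross:
  assumes "crossfree P" "partition_on {0..<m} P" "C \<in> P"
    and vis: "\<And>V a b c. V \<in> P \<Longrightarrow> V \<noteq> C \<Longrightarrow> a < b \<Longrightarrow> b < c \<Longrightarrow> a \<in> V \<Longrightarrow> c \<in> V \<Longrightarrow> b \<in> C \<Longrightarrow> False"
  shows "crossfree (addto m P C)"
proof (rule crossfreeI)
  fix V W a b c d assume V: "V \<in> addto m P C" and W: "W \<in> addto m P C" and "V \<noteq> W"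
    and abcd: "a < b" "b < c" "c < d" "a \<in> V" "c \<in> V" "b \<in> W" "d \<in> W"
  have nm: "m \<notin> X" if "X \<in> P" for X using part_nm[OF assms(2) that] .
  define V0 where "V0 = (if V = insert m C then C else V)"
  define W0 where "W0 = (if W = insert m C then C else W)"
  have Vc: "V = insert m C \<or> (V \<in> P \<and> V \<noteq> C)" by (rule addto_cases[OF V])
  have Wc: "W = insert m C \<or> (W \<in> P \<and> W \<noteq> C)" by (rule addto_cases[OF W])
  have V0: "V0 \<in> P" "\<And>x. x \<in> V \<Longrightarrow> x \<noteq> m \<Longrightarrow> x \<in> V0" using Vc assms(3) unfolding V0_def by auto
  have W0: "W0 \<in> P" "\<And>x. x \<in> W \<Longrightarrow> x \<noteq> m \<Longrightarrow> x \<in> W0" using Wc assms(3) unfolding W0_def by auto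
  have "V0 \<noteq> W0" using \<open>V \<noteq> W\<close> Vc Wc unfolding V0_def W0_def by auto
  have dle: "d \<le> m"
    using Wc abcd(7) part_lt[OF assms(2), of W d] part_lt[OF assms(2) assms(3), of d] by auto
  have am: "a \<noteq> m" "b \<noteq> m" "c \<noteq> m" using abcd(1-3) dle by auto
  show False
  proof (cases "d = m")
    case False
    have "a \<in> V0" "c \<in> V0" "b \<in> W0" "d \<in> W0" using abcd am False V0(2) W0(2) by auto
    then show False by (rule crossfreeD[OF assms(1) V0(1) W0(1) \<open>V0 \<noteq> W0\<close> abcd(1-3)])
  next
    case True
    have "W = insert m C" using Wc abcd(7) True nm by auto
    then have "W0 = C" unfolding W0_def by simp
    have "b \<in> C" using abcd(6) am(2) W0(2) \<open>W0 = C\<close> by auto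
    have "a \<in> V0" "c \<in> V0" using abcd am V0(2) by auto
    have "V0 \<noteq> C" using \<open>V0 \<noteq> W0\<close> \<open>W0 = C\<close> by simp
    show False by (rule vis[OF V0(1) \<open>V0 \<noteq> C\<close> abcd(1,2) \<open>a \<in> V0\<close> \<open>c \<in> V0\<close> \<open>b \<in> C\<close>])
  qed
qed

lemma rem_addto: assumes "partition_on {0..<m} P" "C \<in> P" shows "rem m (addto m P C) = P"
proof -
  have sub: "\<And>X. X \<in> P \<Longrightarrow> m \<notin> X" using part_nm[OF assms(1)] by simp
  have "(\<lambda>V. V - {m}) ` (P - {C}) = (\<lambda>V. V) ` (P - {C})"
    by (rule image_cong) (auto simp: sub)
  then have "(\<lambda>V. V - {m}) ` (P - {C}) = P - {C}" by simp
  then have e: "(\<lambda>V. V - {m}) ` addto m P C = insert C (P - {C})"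
    unfolding addto_def using sub[OF assms(2)] by simp
  have "insert C (P - {C}) = P" by (rule insert_Diff[OF assms(2)])
  moreover have "{} \<notin> P" using partition_onD3[OF assms(1)] .
  ultimately show ?thesis unfolding rem_def e by simp
qed

lemma rem_addsing: assumes "partition_on {0..<m} P" shows "rem m (insert {m} P) = P"
proof -
  have sub: "\<And>X. X \<in> P \<Longrightarrow> m \<notin> X" using part_nm[OF assms(1)] by simp
  have "(\<lambda>V. V - {m}) ` P = (\<lambda>V. V) ` P"
    by (rule image_cong) (auto simp: sub)
  then have e: "(\<lambda>V. V - {m}) ` insert {m} P = insert {} P" by simp
  have "{} \<notin> P" using partition_onD3[OF assms(1)] .
  then show ?thesis unfolding rem_def e by simp
qed

lemma rem_eq: assumes "partition_on {0..<Suc m} P" "C \<in> P" "m \<in> C"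
  shows "rem m P = (if C = {m} then P - {C} else insert (C - {m}) (P - {C}))"
proof -
  have sub: "\<And>X. X \<in> P \<Longrightarrow> X \<noteq> C \<Longrightarrow> m \<notin> X" using part_disj[OF assms(1) assms(2) _ assms(3)] by blast
  have "(\<lambda>V. V - {m}) ` (P - {C}) = (\<lambda>V. V) ` (P - {C})"
    by (rule image_cong) (auto simp: sub)
  then have "(\<lambda>V. V - {m}) ` (P - {C}) = P - {C}" by simp
  moreover have "P = insert C (P - {C})" using insert_Diff[OF assms(2)] by simp
  ultimately have e: "(\<lambda>V. V - {m}) ` P = insert (C - {m}) (P - {C})"
    by (metis image_insert)
  have "{} \<notin> P" using partition_onD3[OF assms(1)] .
  show ?thesis
  proof (cases "C = {m}")
    case True
    then show ?thesis unfolding rem_def e using \<open>{} \<notin> P\<close> by auto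
  next
    case False
    then have "C - {m} \<noteq> {}" using assms(3) by auto
    then show ?thesis unfolding rem_def e using \<open>{} \<notin> P\<close> False by auto
  qed
qed

lemma addto_rem: assumes "partition_on {0..<Suc m} P" "C \<in> P" "m \<in> C" "C \<noteq> {m}"
  shows "addto m (rem m P) (C - {m}) = P"
proof -
  have r: "rem m P = insert (C - {m}) (P - {C})" using rem_eq[OF assms(1-3)] assms(4) by simp
  have "C - {m} \<notin> P - {C}"
  proof
    assume h: "C - {m} \<in> P - {C}"
    obtain x where "x \<in> C - {m}" using assms(3,4) by blast
    then have "C - {m} = C" using part_disj[OF assms(1), of "C - {m}" C x] h assms(2) by blast
    then show False using h by blast
  qed
  then have "insert (C - {m}) (P - {C}) - {C - {m}} = P - {C}" by blast
  moreover have "insert m (C - {m}) = C" by (rule insert_Diff[OF assms(3)])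
  moreover have "insert C (P - {C}) = P" by (rule insert_Diff[OF assms(2)])
  ultimately show ?thesis unfolding addto_def r by simp
qed

lemma addsing_rem: assumes "partition_on {0..<Suc m} P" "{m} \<in> P"
  shows "insert {m} (rem m P) = P"
  using rem_eq[OF assms(1,2)] assms(2) by auto

lemma blk_addto: assumes "partition_on {0..<m} P" "C \<in> P" shows "blk m (addto m P C) = insert m C"
  by (rule part_blk[OF addto_part[OF assms]]) (auto simp: addto_def)

lemma blk_in: assumes "partition_on {0..<Suc m} P" shows "blk m P \<in> P" "m \<in> blk m P"
proof -
  obtain C where "C \<in> P" "m \<in> C" using part_ex[OF assms, of m] by auto
  then show "blk m P \<in> P" "m \<in> blk m P" using part_blk[OF assms] by auto
qed

section \<open>Partitions with open blocks\<close>

definition ordB :: "nat set list \<Rightarrow> bool" where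
  "ordB Bs = sorted_wrt (\<lambda>A B. \<forall>a\<in>A. \<forall>b\<in>B. b < a) Bs"

lemma ordB_Cons: "ordB (A # Bs) \<longleftrightarrow> (\<forall>B\<in>set Bs. \<forall>a\<in>A. \<forall>b\<in>B. b < a) \<and> ordB Bs"
  unfolding ordB_def by simp

definition vis :: "nat set set \<Rightarrow> nat set list \<Rightarrow> bool" where
  "vis P Bs \<longleftrightarrow> (\<forall>B\<in>set Bs. \<forall>C\<in>P. C \<notin> set Bs \<longrightarrow>
      (\<forall>c1 b c2. c1 < b \<longrightarrow> b < c2 \<longrightarrow> c1 \<in> C \<longrightarrow> c2 \<in> C \<longrightarrow> b \<in> B \<longrightarrow> False))"

lemma visD: "vis P Bs \<Longrightarrow> B \<in> set Bs \<Longrightarrow> C \<in> P \<Longrightarrow> C \<notin> set Bs \<Longrightarrow> c1 < b \<Longrightarrow> b < c2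
   \<Longrightarrow> c1 \<in> C \<Longrightarrow> c2 \<in> C \<Longrightarrow> b \<in> B \<Longrightarrow> False"
  unfolding vis_def by metis

lemma visI: "(\<And>B C c1 b c2. B \<in> set Bs \<Longrightarrow> C \<in> P \<Longrightarrow> C \<notin> set Bs \<Longrightarrow> c1 < b \<Longrightarrow> b < c2
   \<Longrightarrow> c1 \<in> C \<Longrightarrow> c2 \<in> C \<Longrightarrow> b \<in> B \<Longrightarrow> False) \<Longrightarrow> vis P Bs"
  unfolding vis_def by metis

definition NCO :: "nat \<Rightarrow> nat \<Rightarrow> (nat set set \<times> nat set list) set" where
  "NCO n k = {(P, Bs). partition_on {0..<n} P \<and> crossfree P \<and> length Bs = k \<and> distinct Bs
      \<and> set Bs \<subseteq> P \<and> ordB Bs \<and> vis P Bs}"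

lemma NCO_iff: "(P, Bs) \<in> NCO n k \<longleftrightarrow> partition_on {0..<n} P \<and> crossfree P \<and> length Bs = k \<and> distinct Bs
      \<and> set Bs \<subseteq> P \<and> ordB Bs \<and> vis P Bs"
  unfolding NCO_def by simp

lemma plus_in:
  assumes "(P', C' # Bs) \<in> NCO m (Suc k)"
  shows "(addto m P' C', Bs) \<in> NCO (Suc m) k" "blk m (addto m P' C') = insert m C'"
    "insert m C' \<notin> set Bs" "insert m C' \<noteq> {m}"
proof -
  have pp: "partition_on {0..<m} P'" and cf: "crossfree P'" and len: "length (C' # Bs) = Suc k"
    and di: "distinct (C' # Bs)" and sb: "set (C' # Bs) \<subseteq> P'" and od: "ordB (C' # Bs)"
    and vi: "vis P' (C' # Bs)" using assms unfolding NCO_iff by auto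
  have C': "C' \<in> P'" using sb by simp
  have odC: "\<And>B a b. B \<in> set Bs \<Longrightarrow> a \<in> C' \<Longrightarrow> b \<in> B \<Longrightarrow> b < a" and odB: "ordB Bs"
    using od unfolding ordB_Cons by auto
  have BsP: "\<And>B. B \<in> set Bs \<Longrightarrow> B \<in> P'" using sb by auto
  have BsC: "\<And>B. B \<in> set Bs \<Longrightarrow> B \<noteq> C'" using di by auto
  have cov: False if "V \<in> P'" "V \<noteq> C'" "a < b" "b < c" "a \<in> V" "c \<in> V" "b \<in> C'" for V a b c
  proof (cases "V \<in> set Bs")
    case True
    from odC[OF True that(7) that(6)] that(4) show False by simp
  next
    case False
    then have nV: "V \<notin> set (C' # Bs)" using that(2) by simp
    have C'in: "C' \<in> set (C' # Bs)" by simp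
    show False by (rule visD[OF vi C'in that(1) nV that(3-7)])
  qed
  have pa: "partition_on {0..<Suc m} (addto m P' C')" by (rule addto_part[OF pp C'])
  have cr: "crossfree (addto m P' C')" by (rule addto_cross[OF cf pp C' cov])
  have sb2: "set Bs \<subseteq> addto m P' C'" using BsP BsC unfolding addto_def by auto
  have vi2: "vis (addto m P' C') Bs"
  proof (rule visI)
    fix B D c1 b c2 assume B: "B \<in> set Bs" and D: "D \<in> addto m P' C'" and DB: "D \<notin> set Bs"
      and h: "c1 < b" "b < c2" "c1 \<in> D" "c2 \<in> D" "b \<in> B"
    have bm: "b < m" using part_lt[OF pp BsP[OF B] h(5)] .
    show False
    proof (cases "D = insert m C'")
      case True
      then have "c1 \<in> C'" using h(1,3) bm by auto
      from odC[OF B this h(5)] h(1) show False by simp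
    next
      case False
      then have "D \<in> P'" "D \<noteq> C'" using D unfolding addto_def by auto
      then have nD: "D \<notin> set (C' # Bs)" using DB by simp
      have Bin: "B \<in> set (C' # Bs)" using B by simp
      show False by (rule visD[OF vi Bin \<open>D \<in> P'\<close> nD h(1-5)])
    qed
  qed
  show "(addto m P' C', Bs) \<in> NCO (Suc m) k"
    unfolding NCO_iff using pa cr len di sb2 odB vi2 by simp
  show "blk m (addto m P' C') = insert m C'" by (rule blk_addto[OF pp C'])
  show "insert m C' \<notin> set Bs" using part_nm[OF pp BsP] by blast
  show "insert m C' \<noteq> {m}" using part_ne[OF pp C'] part_nm[OF pp C'] by blast
qed

lemma plus_out:
  assumes "(P, Bs) \<in> NCO (Suc m) k" "blk m P \<notin> set Bs" "blk m P \<noteq> {m}"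
  shows "(rem m P, (blk m P - {m}) # Bs) \<in> NCO m (Suc k)"
proof -
  have pp: "partition_on {0..<Suc m} P" and cf: "crossfree P" and len: "length Bs = k"
    and di: "distinct Bs" and sb: "set Bs \<subseteq> P" and od: "ordB Bs"
    and vi: "vis P Bs" using assms(1) unfolding NCO_iff by auto
  define C where "C = blk m P"
  have C: "C \<in> P" "m \<in> C" using blk_in[OF pp] unfolding C_def by auto
  have CB: "C \<notin> set Bs" "C \<noteq> {m}" using assms(2,3) unfolding C_def by auto
  have r: "rem m P = insert (C - {m}) (P - {C})" using rem_eq[OF pp C] CB(2) by simp
  have BsP: "\<And>B. B \<in> set Bs \<Longrightarrow> B \<in> P" using sb by auto
  have BnC: "\<And>B. B \<in> set Bs \<Longrightarrow> B \<noteq> C" using CB(1) by auto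
  have Bnm: "\<And>B b. B \<in> set Bs \<Longrightarrow> b \<in> B \<Longrightarrow> b \<noteq> m"
    using part_disj[OF pp _ C(1) _ C(2)] BnC BsP by blast
  have Blt: "\<And>B b. B \<in> set Bs \<Longrightarrow> b \<in> B \<Longrightarrow> b < m"
  proof -
    fix B b assume "B \<in> set Bs" "b \<in> B"
    then have "b < Suc m" "b \<noteq> m" using part_lt[OF pp BsP] Bnm by auto
    then show "b < m" by simp
  qed
  obtain x where x: "x \<in> C" "x \<noteq> m" using C(2) CB(2) by blast
  have ndi: "C - {m} \<notin> set Bs"
  proof
    assume h: "C - {m} \<in> set Bs"
    have "C - {m} = C" using part_disj[OF pp BsP[OF h] C(1), of x] x by simp
    then show False using h CB(1) by simp
  qed
  have sb2: "set ((C - {m}) # Bs) \<subseteq> rem m P" unfolding r using BsP BnC by auto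
  have od2: "ordB ((C - {m}) # Bs)" unfolding ordB_Cons
  proof (intro conjI ballI od)
    fix B a b assume B: "B \<in> set Bs" and a: "a \<in> C - {m}" and b: "b \<in> B"
    show "b < a"
    proof (rule ccontr)
      assume "\<not> b < a"
      moreover have "a \<noteq> b" using part_disj[OF pp C(1) BsP[OF B], of a] a b BnC[OF B] by auto
      ultimately have ab: "a < b" by simp
      have bm: "b < m" by (rule Blt[OF B b])
      have am: "a \<in> C" using a by simp
      show False by (rule visD[OF vi B C(1) CB(1) ab bm am C(2) b])
    qed
  qed
  have vi2: "vis (rem m P) ((C - {m}) # Bs)"
  proof (rule visI)
    fix B D c1 b c2 assume B: "B \<in> set ((C - {m}) # Bs)" and D: "D \<in> rem m P" and DB: "D \<notin> set ((C - {m}) # Bs)"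
      and h: "c1 < b" "b < c2" "c1 \<in> D" "c2 \<in> D" "b \<in> B"
    have DP: "D \<in> P" "D \<noteq> C" using D DB unfolding r by auto
    have DnB: "D \<notin> set Bs" using DB by simp
    show False
    proof (cases "B = C - {m}")
      case True
      have "c2 \<noteq> m" using part_disj[OF pp DP(1) C(1) h(4)] DP(2) C(2) by auto
      then have c2m: "c2 < m" using part_lt[OF pp DP(1) h(4)] by simp
      have bC: "b \<in> C" using h(5) True by simp
      show False by (rule crossfreeD[OF cf DP(1) C(1) DP(2) h(1) h(2) c2m h(3) h(4) bC C(2)])
    next
      case False
      then have "B \<in> set Bs" using B by simp
      show False by (rule visD[OF vi \<open>B \<in> set Bs\<close> DP(1) DnB h])
    qed
  qed
  show ?thesis unfolding NCO_iff C_def[symmetric]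
    using rem_part[OF pp] rem_cross[OF cf] len di ndi sb2 od2 vi2 by simp
qed

lemma minus_in:
  assumes "(P', Bs) \<in> NCO m k"
  shows "(insert {m} P', {m} # Bs) \<in> NCO (Suc m) (Suc k)"
proof -
  have pp: "partition_on {0..<m} P'" and cf: "crossfree P'" and len: "length Bs = k"
    and di: "distinct Bs" and sb: "set Bs \<subseteq> P'" and od: "ordB Bs"
    and vi: "vis P' Bs" using assms(1) unfolding NCO_iff by auto
  have BsP: "\<And>B. B \<in> set Bs \<Longrightarrow> B \<in> P'" using sb by auto
  have ndi: "{m} \<notin> set Bs" using part_nm[OF pp BsP] by blast
  have od2: "ordB ({m} # Bs)" unfolding ordB_Cons using od part_lt[OF pp BsP] by auto
  have vi2: "vis (insert {m} P') ({m} # Bs)"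
  proof (rule visI)
    fix B D c1 b c2 assume B: "B \<in> set ({m} # Bs)" and D: "D \<in> insert {m} P'" and DB: "D \<notin> set ({m} # Bs)"
      and h: "c1 < b" "b < c2" "c1 \<in> D" "c2 \<in> D" "b \<in> B"
    have DP: "D \<in> P'" using D DB by auto
    have DnB: "D \<notin> set Bs" using DB by simp
    have c2m: "c2 < m" by (rule part_lt[OF pp DP h(4)])
    show False
    proof (cases "B = {m}")
      case True
      then show False using h(2,5) c2m by simp
    next
      case False
      then have "B \<in> set Bs" using B by simp
      show False by (rule visD[OF vi \<open>B \<in> set Bs\<close> DP DnB h])
    qed
  qed
  have sb2: "set ({m} # Bs) \<subseteq> insert {m} P'" using sb by auto
  show ?thesis unfolding NCO_iff
    using addsing_part[OF pp] addsing_cross[OF cf pp] len di ndi sb2 od2 vi2 by simp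
qed

lemma minus_out:
  assumes "(P, {m} # Bs) \<in> NCO (Suc m) (Suc k)"
  shows "(rem m P, Bs) \<in> NCO m k"
proof -
  have pp: "partition_on {0..<Suc m} P" and cf: "crossfree P" and len: "length ({m} # Bs) = Suc k"
    and di: "distinct ({m} # Bs)" and sb: "set ({m} # Bs) \<subseteq> P" and od: "ordB ({m} # Bs)"
    and vi: "vis P ({m} # Bs)" using assms(1) unfolding NCO_iff by auto
  have mP: "{m} \<in> P" using sb by simp
  have r: "rem m P = P - {{m}}" using rem_eq[OF pp mP] by simp
  have sb2: "set Bs \<subseteq> rem m P" unfolding r using sb di by auto
  have vi2: "vis (rem m P) Bs"
  proof (rule visI)
    fix B D c1 b c2 assume B: "B \<in> set Bs" and D: "D \<in> rem m P" and DB: "D \<notin> set Bs"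
      and h: "c1 < b" "b < c2" "c1 \<in> D" "c2 \<in> D" "b \<in> B"
    have DP: "D \<in> P" "D \<notin> set ({m} # Bs)" using D DB unfolding r by auto
    have B2: "B \<in> set ({m} # Bs)" using B by simp
    show False by (rule visD[OF vi B2 DP h])
  qed
  show ?thesis unfolding NCO_iff
    using rem_part[OF pp] rem_cross[OF cf] len di sb2 od vi2 unfolding ordB_Cons by simp
qed

lemma zero_in:
  assumes "(P', B' # Bs) \<in> NCO m (Suc k)"
  shows "(addto m P' B', insert m B' # Bs) \<in> NCO (Suc m) (Suc k)" "insert m B' \<noteq> {m}"
proof -
  have pp: "partition_on {0..<m} P'" and cf: "crossfree P'" and len: "length (B' # Bs) = Suc k"
    and di: "distinct (B' # Bs)" and sb: "set (B' # Bs) \<subseteq> P'" and od: "ordB (B' # Bs)"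
    and vi: "vis P' (B' # Bs)" using assms unfolding NCO_iff by auto
  have B': "B' \<in> P'" using sb by simp
  have odC: "\<And>B a b. B \<in> set Bs \<Longrightarrow> a \<in> B' \<Longrightarrow> b \<in> B \<Longrightarrow> b < a" and odB: "ordB Bs"
    using od unfolding ordB_Cons by auto
  have BsP: "\<And>B. B \<in> set Bs \<Longrightarrow> B \<in> P'" using sb by auto
  have BsC: "\<And>B. B \<in> set Bs \<Longrightarrow> B \<noteq> B'" using di by auto
  have cov: False if "V \<in> P'" "V \<noteq> B'" "a < b" "b < c" "a \<in> V" "c \<in> V" "b \<in> B'" for V a b c
  proof (cases "V \<in> set Bs")
    case True
    from odC[OF True that(7) that(6)] that(4) show False by simp
  next
    case False
    then have nV: "V \<notin> set (B' # Bs)" using that(2) by simp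
    have B'in: "B' \<in> set (B' # Bs)" by simp
    show False by (rule visD[OF vi B'in that(1) nV that(3-7)])
  qed
  have pa: "partition_on {0..<Suc m} (addto m P' B')" by (rule addto_part[OF pp B'])
  have cr: "crossfree (addto m P' B')" by (rule addto_cross[OF cf pp B' cov])
  have ndi: "insert m B' \<notin> set Bs" using part_nm[OF pp BsP] by blast
  have sb2: "set (insert m B' # Bs) \<subseteq> addto m P' B'" using BsP BsC unfolding addto_def by auto
  have od2: "ordB (insert m B' # Bs)" unfolding ordB_Cons
  proof (intro conjI ballI odB)
    fix B a b assume B: "B \<in> set Bs" and a: "a \<in> insert m B'" and b: "b \<in> B"
    show "b < a"
    proof (cases "a = m")
      case True
      then show ?thesis using part_lt[OF pp BsP[OF B] b] by simp
    next
      case False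
      then show ?thesis using odC[OF B _ b] a by simp
    qed
  qed
  have vi2: "vis (addto m P' B') (insert m B' # Bs)"
  proof (rule visI)
    fix B D c1 b c2 assume B: "B \<in> set (insert m B' # Bs)" and D: "D \<in> addto m P' B'"
      and DB: "D \<notin> set (insert m B' # Bs)"
      and h: "c1 < b" "b < c2" "c1 \<in> D" "c2 \<in> D" "b \<in> B"
    have DP: "D \<in> P'" "D \<noteq> B'" using D DB unfolding addto_def by auto
    have nD: "D \<notin> set (B' # Bs)" using DB DP(2) by simp
    have c2m: "c2 < m" by (rule part_lt[OF pp DP(1) h(4)])
    show False
    proof (cases "B = insert m B'")
      case True
      then have bB: "b \<in> B'" using h(2,5) c2m by auto
      have B'in: "B' \<in> set (B' # Bs)" by simp
      show False by (rule visD[OF vi B'in DP(1) nD h(1-4) bB])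
    next
      case False
      then have Bin: "B \<in> set (B' # Bs)" using B by simp
      show False by (rule visD[OF vi Bin DP(1) nD h])
    qed
  qed
  show "(addto m P' B', insert m B' # Bs) \<in> NCO (Suc m) (Suc k)"
    unfolding NCO_iff using pa cr len di ndi sb2 od2 vi2 by simp
  show "insert m B' \<noteq> {m}" using part_ne[OF pp B'] part_nm[OF pp B'] by blast
qed

lemma zero_out:
  assumes "(P, B # Bs) \<in> NCO (Suc m) (Suc k)" "m \<in> B" "B \<noteq> {m}"
  shows "(rem m P, (B - {m}) # Bs) \<in> NCO m (Suc k)"
proof -
  have pp: "partition_on {0..<Suc m} P" and cf: "crossfree P" and len: "length (B # Bs) = Suc k"
    and di: "distinct (B # Bs)" and sb: "set (B # Bs) \<subseteq> P" and od: "ordB (B # Bs)"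
    and vi: "vis P (B # Bs)" using assms(1) unfolding NCO_iff by auto
  have BP: "B \<in> P" using sb by simp
  have r: "rem m P = insert (B - {m}) (P - {B})" using rem_eq[OF pp BP assms(2)] assms(3) by simp
  have BsP: "\<And>B2. B2 \<in> set Bs \<Longrightarrow> B2 \<in> P" using sb by auto
  have BnC: "\<And>B2. B2 \<in> set Bs \<Longrightarrow> B2 \<noteq> B" using di by auto
  obtain x where x: "x \<in> B" "x \<noteq> m" using assms(2,3) by blast
  have ndi: "B - {m} \<notin> set Bs"
  proof
    assume h: "B - {m} \<in> set Bs"
    have "B - {m} = B" using part_disj[OF pp BsP[OF h] BP, of x] x by simp
    then show False using h BnC by blast
  qed
  have sb2: "set ((B - {m}) # Bs) \<subseteq> rem m P" unfolding r using BsP BnC by auto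
  have od2: "ordB ((B - {m}) # Bs)" using od unfolding ordB_Cons by auto
  have vi2: "vis (rem m P) ((B - {m}) # Bs)"
  proof (rule visI)
    fix B1 D c1 b c2 assume B1: "B1 \<in> set ((B - {m}) # Bs)" and D: "D \<in> rem m P" and DB: "D \<notin> set ((B - {m}) # Bs)"
      and h: "c1 < b" "b < c2" "c1 \<in> D" "c2 \<in> D" "b \<in> B1"
    have DP: "D \<in> P" "D \<noteq> B" using D DB unfolding r by auto
    have nD: "D \<notin> set (B # Bs)" using DB DP(2) by simp
    show False
    proof (cases "B1 = B - {m}")
      case True
      have bB: "b \<in> B" using h(5) True by simp
      have Bin: "B \<in> set (B # Bs)" by simp
      show False by (rule visD[OF vi Bin DP(1) nD h(1-4) bB])
    next
      case False
      then have Bin: "B1 \<in> set (B # Bs)" using B1 by simp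
      show False by (rule visD[OF vi Bin DP(1) nD h])
    qed
  qed
  show ?thesis unfolding NCO_iff
    using rem_part[OF pp] rem_cross[OF cf] len di ndi sb2 od2 vi2 by simp
qed

section \<open>Weights\<close>

definition hh :: "('b::unital_star_algebra \<Rightarrow> complex) \<Rightarrow> ('b \<Rightarrow> 'b \<Rightarrow> 'b) \<Rightarrow> 'b list \<Rightarrow> 'b \<Rightarrow> complex" where
  "hh \<phi> \<Lambda> vs x = (case vs of [] \<Rightarrow> 0 | v # vs' \<Rightarrow> \<phi> (v * foldr \<Lambda> vs' x))"

definition KK :: "('b::unital_star_algebra \<Rightarrow> complex) \<Rightarrow> ('b \<Rightarrow> 'b \<Rightarrow> 'b) \<Rightarrow> 'b list \<Rightarrow> complex" where
  "KK \<phi> \<Lambda> zs = (if zs = [] then 0 else hh \<phi> \<Lambda> (butlast zs) (last zs))"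

definition sub :: "'b list \<Rightarrow> nat set \<Rightarrow> 'b list" where
  "sub us C = map (\<lambda>i. us ! i) (sorted_list_of_set C)"

definition Wc :: "('b::unital_star_algebra \<Rightarrow> complex) \<Rightarrow> ('b \<Rightarrow> 'b \<Rightarrow> 'b) \<Rightarrow> 'b list \<Rightarrow> nat set set \<Rightarrow> nat set list \<Rightarrow> complex" where
  "Wc \<phi> \<Lambda> us P Bs = (\<Prod>C\<in>P - set Bs. KK \<phi> \<Lambda> (sub us C))"

definition Wb :: "('b::unital_star_algebra \<Rightarrow> complex) \<Rightarrow> ('b \<Rightarrow> 'b \<Rightarrow> 'b) \<Rightarrow> 'b list \<Rightarrow> nat set list \<Rightarrow> 'b list \<Rightarrow> complex" where
  "Wb \<phi> \<Lambda> us Bs w = prod_list (map (\<lambda>(B, x). hh \<phi> \<Lambda> (sub us B) x) (zip Bs w))"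

definition WW :: "('b::unital_star_algebra \<Rightarrow> complex) \<Rightarrow> ('b \<Rightarrow> 'b \<Rightarrow> 'b) \<Rightarrow> 'b list \<Rightarrow> 'b list \<Rightarrow> nat set set \<times> nat set list \<Rightarrow> complex" where
  "WW \<phi> \<Lambda> us w a = Wc \<phi> \<Lambda> us (fst a) (snd a) * Wb \<phi> \<Lambda> us (snd a) w"

lemma hh_single: "hh \<phi> \<Lambda> [u] x = \<phi> (u * x)"
  by (simp add: hh_def)

lemma hh_snoc: "vs \<noteq> [] \<Longrightarrow> hh \<phi> \<Lambda> (vs @ [u]) x = hh \<phi> \<Lambda> vs (\<Lambda> u x)"
  by (cases vs) (auto simp: hh_def)

lemma KK_snoc: "KK \<phi> \<Lambda> (vs @ [u]) = hh \<phi> \<Lambda> vs u"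
  by (simp add: KK_def)

lemma KK_single: "KK \<phi> \<Lambda> [u] = 0"
  by (simp add: KK_def hh_def)

lemma insort_end: "sorted xs \<Longrightarrow> (\<forall>x\<in>set xs. x < (m::nat)) \<Longrightarrow> insort m xs = xs @ [m]"
  by (induction xs) auto

lemma sub_lt: assumes "finite C" "\<forall>c\<in>C. c < length us" shows "sub (us @ [u]) C = sub us C"
  unfolding sub_def using assms by (auto simp: nth_append)

lemma sub_ins: assumes "finite C" "\<forall>c\<in>C. c < length us"
  shows "sub (us @ [u]) (insert (length us) C) = sub us C @ [u]"
proof -
  have "length us \<notin> C" using assms(2) by auto
  then have "sorted_list_of_set (insert (length us) C) = sorted_list_of_set C @ [length us]"
    using sorted_list_of_set_insert[OF assms(1)] insort_end[of "sorted_list_of_set C" "length us"] assms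
    by simp
  then show ?thesis unfolding sub_def using assms by (auto simp: nth_append)
qed

lemma sub_ne: "finite C \<Longrightarrow> C \<noteq> {} \<Longrightarrow> sub us C \<noteq> []"
  unfolding sub_def by simp

lemma sub_single: "sub (us @ [u]) {length us} = [u]"
  unfolding sub_def by simp

lemma bij_sum:
  assumes "\<And>a. a \<in> S \<Longrightarrow> i (j a) = a" "\<And>a. a \<in> S \<Longrightarrow> j a \<in> T" "\<And>b. b \<in> T \<Longrightarrow> j (i b) = b"
    "\<And>b. b \<in> T \<Longrightarrow> i b \<in> S" "\<And>b. b \<in> T \<Longrightarrow> g (i b) = h b"
  shows "sum g S = sum h T"
proof (rule sum.reindex_bij_witness[of S i j])
  fix a assume a: "a \<in> S"
  show "i (j a) = a" by (rule assms(1)[OF a])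
  show "j a \<in> T" by (rule assms(2)[OF a])
  show "h (j a) = g a" using assms(5)[OF assms(2)[OF a]] assms(1)[OF a] by simp
next
  fix b assume b: "b \<in> T"
  show "j (i b) = b" by (rule assms(3)[OF b])
  show "i b \<in> S" by (rule assms(4)[OF b])
qed

lemma Wb_lt: assumes "\<forall>B\<in>set Bs. finite B \<and> (\<forall>c\<in>B. c < length us)"
  shows "Wb \<phi> \<Lambda> (us @ [u]) Bs w = Wb \<phi> \<Lambda> us Bs w"
proof -
  have "map (\<lambda>(B, x). hh \<phi> \<Lambda> (sub (us @ [u]) B) x) (zip Bs w) = map (\<lambda>(B, x). hh \<phi> \<Lambda> (sub us B) x) (zip Bs w)"
  proof (rule map_cong[OF refl])
    fix p assume p: "p \<in> set (zip Bs w)"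
    obtain B x where px: "p = (B, x)" by (cases p)
    have "B \<in> set Bs" using p unfolding px by (rule set_zip_leftD)
    then have "finite B" "\<forall>c\<in>B. c < length us" using assms by auto
    then have "sub (us @ [u]) B = sub us B" by (rule sub_lt)
    then show "(\<lambda>(B, x). hh \<phi> \<Lambda> (sub (us @ [u]) B) x) p = (\<lambda>(B, x). hh \<phi> \<Lambda> (sub us B) x) p"
      unfolding px by simp
  qed
  then show ?thesis unfolding Wb_def by (rule arg_cong[where f=prod_list])
qed

lemma Wb_Cons: "Wb \<phi> \<Lambda> us (B # Bs) (x # w) = hh \<phi> \<Lambda> (sub us B) x * Wb \<phi> \<Lambda> us Bs w"
  unfolding Wb_def by simp

lemma Wc_lt: assumes "\<forall>B\<in>Q. finite B \<and> (\<forall>c\<in>B. c < length us)"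
  shows "(\<Prod>C\<in>Q. KK \<phi> \<Lambda> (sub (us @ [u]) C)) = (\<Prod>C\<in>Q. KK \<phi> \<Lambda> (sub us C))"
proof (rule prod.cong[OF refl])
  fix C assume "C \<in> Q"
  then have "finite C" "\<forall>c\<in>C. c < length us" using assms by auto
  then show "KK \<phi> \<Lambda> (sub (us @ [u]) C) = KK \<phi> \<Lambda> (sub us C)" by (simp add: sub_lt)
qed

lemma NCO_blocks: assumes "(P, Bs) \<in> NCO n k" "V \<in> P" shows "finite V" "\<forall>c\<in>V. c < n"
proof -
  have pp: "partition_on {0..<n} P" using assms(1) unfolding NCO_iff by simp
  have "V \<subseteq> {0..<n}" by (rule part_sub[OF pp assms(2)])
  then show "finite V" "\<forall>c\<in>V. c < n" using finite_subset by auto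
qed

lemma NCO_finP: assumes "(P, Bs) \<in> NCO n k" shows "finite P"
proof -
  have pp: "partition_on {0..<n} P" using assms(1) unfolding NCO_iff by simp
  have "P \<subseteq> Pow {0..<n}" using part_sub[OF pp] by blast
  then show ?thesis by (rule finite_subset) simp
qed

lemma NCO_fin: "finite (NCO n k)"
proof -
  have "NCO n k \<subseteq> Pow (Pow {0..<n}) \<times> {Bs. set Bs \<subseteq> Pow {0..<n} \<and> length Bs = k}"
  proof
    fix a assume a: "a \<in> NCO n k"
    obtain P Bs where ab: "a = (P, Bs)" by (cases a)
    have pp: "partition_on {0..<n} P" and sb: "set Bs \<subseteq> P" and len: "length Bs = k"
      using a unfolding ab NCO_iff by auto
    have "P \<subseteq> Pow {0..<n}" using part_sub[OF pp] by blast
    then show "a \<in> Pow (Pow {0..<n}) \<times> {Bs. set Bs \<subseteq> Pow {0..<n} \<and> length Bs = k}"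
      unfolding ab using sb len by auto
  qed
  moreover have "finite (Pow (Pow {0..<n}) \<times> {Bs. set Bs \<subseteq> Pow {0..<n} \<and> length Bs = k})"
    by (intro finite_cartesian_product finite_lists_length_eq) auto
  ultimately show ?thesis by (rule finite_subset)
qed

lemma w_plus:
  assumes a: "(P', C' # Bs) \<in> NCO m (Suc k)" and lu: "length us = m"
  shows "WW \<phi> \<Lambda> (us @ [u]) w (addto m P' C', Bs) = WW \<phi> \<Lambda> us (u # w) (P', C' # Bs)"
proof -
  have pp: "partition_on {0..<m} P'" and sb: "set (C' # Bs) \<subseteq> P'" using a unfolding NCO_iff by auto
  have C': "C' \<in> P'" using sb by simp
  have blocks: "\<forall>B\<in>P'. finite B \<and> (\<forall>c\<in>B. c < length us)" using NCO_blocks[OF a] lu by blast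
  have finP: "finite P'" by (rule NCO_finP[OF a])
  have ins: "insert m C' \<notin> set Bs" by (rule plus_in(3)[OF a])
  have e: "addto m P' C' - set Bs = insert (insert m C') (P' - set (C' # Bs))"
    unfolding addto_def using ins by auto
  have ni: "insert m C' \<notin> P' - set (C' # Bs)" using part_nm[OF pp] by blast
  have "Wc \<phi> \<Lambda> (us @ [u]) (addto m P' C') Bs
      = KK \<phi> \<Lambda> (sub (us @ [u]) (insert m C')) * (\<Prod>V\<in>P' - set (C' # Bs). KK \<phi> \<Lambda> (sub (us @ [u]) V))"
    unfolding Wc_def e using finP ni by simp
  also have "\<dots> = hh \<phi> \<Lambda> (sub us C') u * (\<Prod>V\<in>P' - set (C' # Bs). KK \<phi> \<Lambda> (sub us V))"
  proof -
    have "sub (us @ [u]) (insert m C') = sub us C' @ [u]"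
      using sub_ins[of C' us u] blocks C' lu by simp
    moreover have "(\<Prod>V\<in>P' - set (C' # Bs). KK \<phi> \<Lambda> (sub (us @ [u]) V)) = (\<Prod>V\<in>P' - set (C' # Bs). KK \<phi> \<Lambda> (sub us V))"
      by (rule Wc_lt) (use blocks in blast)
    ultimately show ?thesis by (simp add: KK_snoc)
  qed
  finally have c: "Wc \<phi> \<Lambda> (us @ [u]) (addto m P' C') Bs = hh \<phi> \<Lambda> (sub us C') u * Wc \<phi> \<Lambda> us P' (C' # Bs)"
    unfolding Wc_def .
  have b: "Wb \<phi> \<Lambda> (us @ [u]) Bs w = Wb \<phi> \<Lambda> us Bs w"
    by (rule Wb_lt) (use blocks sb in auto)
  show ?thesis unfolding WW_def using c b by (simp add: Wb_Cons)
qed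

lemma w_minus:
  assumes a: "(P', Bs) \<in> NCO m k" and lu: "length us = m"
  shows "WW \<phi> \<Lambda> (us @ [u]) (x # r) (insert {m} P', {m} # Bs) = \<phi> (u * x) * WW \<phi> \<Lambda> us r (P', Bs)"
proof -
  have pp: "partition_on {0..<m} P'" and sb: "set Bs \<subseteq> P'" using a unfolding NCO_iff by auto
  have blocks: "\<forall>B\<in>P'. finite B \<and> (\<forall>c\<in>B. c < length us)" using NCO_blocks[OF a] lu by blast
  have nm: "{m} \<notin> P'" using part_nm[OF pp] by blast
  have e: "insert {m} P' - set ({m} # Bs) = P' - set Bs" using nm by auto
  have c: "Wc \<phi> \<Lambda> (us @ [u]) (insert {m} P') ({m} # Bs) = Wc \<phi> \<Lambda> us P' Bs"
    unfolding Wc_def e by (rule Wc_lt) (use blocks in blast)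
  have s1: "sub (us @ [u]) {m} = [u]" using sub_single[of us u] lu by simp
  have b: "Wb \<phi> \<Lambda> (us @ [u]) Bs r = Wb \<phi> \<Lambda> us Bs r"
    by (rule Wb_lt) (use blocks sb in auto)
  show ?thesis unfolding WW_def using c b s1 by (simp add: Wb_Cons hh_single)
qed

lemma w_zero:
  assumes a: "(P', B' # Bs) \<in> NCO m (Suc k)" and lu: "length us = m"
  shows "WW \<phi> \<Lambda> (us @ [u]) (x # r) (addto m P' B', insert m B' # Bs) = WW \<phi> \<Lambda> us (\<Lambda> u x # r) (P', B' # Bs)"
proof -
  have pp: "partition_on {0..<m} P'" and sb: "set (B' # Bs) \<subseteq> P'" using a unfolding NCO_iff by auto
  have B': "B' \<in> P'" using sb by simp
  have blocks: "\<forall>B\<in>P'. finite B \<and> (\<forall>c\<in>B. c < length us)" using NCO_blocks[OF a] lu by blast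
  have nm: "\<And>X. X \<in> P' \<Longrightarrow> m \<notin> X" using part_nm[OF pp] by blast
  have e: "addto m P' B' - set (insert m B' # Bs) = P' - set (B' # Bs)"
    unfolding addto_def using nm by auto
  have c: "Wc \<phi> \<Lambda> (us @ [u]) (addto m P' B') (insert m B' # Bs) = Wc \<phi> \<Lambda> us P' (B' # Bs)"
    unfolding Wc_def e by (rule Wc_lt) (use blocks in blast)
  have fB: "finite B'" "\<forall>c\<in>B'. c < length us" using blocks B' by auto
  have s1: "sub (us @ [u]) (insert m B') = sub us B' @ [u]"
    using sub_ins[OF fB] lu by simp
  have ne: "sub us B' \<noteq> []" using sub_ne[OF fB(1) part_ne[OF pp B']] .
  have b: "Wb \<phi> \<Lambda> (us @ [u]) Bs r = Wb \<phi> \<Lambda> us Bs r"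
    by (rule Wb_lt) (use blocks sb in auto)
  show ?thesis unfolding WW_def using c b s1 ne by (simp add: Wb_Cons hh_snoc)
qed

lemma w_zeroset:
  assumes a: "(P, Bs) \<in> NCO (Suc m) k" and mP: "{m} \<in> P" "{m} \<notin> set Bs" and lu: "length us = m"
  shows "WW \<phi> \<Lambda> (us @ [u]) w (P, Bs) = 0"
proof -
  have finP: "finite P" by (rule NCO_finP[OF a])
  have "{m} \<in> P - set Bs" using mP by simp
  moreover have "KK \<phi> \<Lambda> (sub (us @ [u]) {m}) = 0" using sub_single[of us u] lu by (simp add: KK_single)
  ultimately have "Wc \<phi> \<Lambda> (us @ [u]) P Bs = 0" unfolding Wc_def using finP
    by (metis (no_types, lifting) finite_Diff prod_zero_iff)
  then show ?thesis unfolding WW_def by simp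
qed

lemma NCO_cover:
  assumes a: "(P, Bs) \<in> NCO (Suc m) k"
  shows "(blk m P \<notin> set Bs \<and> blk m P \<noteq> {m}) \<or> (blk m P = {m} \<and> {m} \<notin> set Bs)
     \<or> (Bs \<noteq> [] \<and> hd Bs = {m}) \<or> (Bs \<noteq> [] \<and> m \<in> hd Bs \<and> hd Bs \<noteq> {m})"
proof -
  have pp: "partition_on {0..<Suc m} P" and sb: "set Bs \<subseteq> P" and od: "ordB Bs"
    using a unfolding NCO_iff by auto
  define C where "C = blk m P"
  have C: "C \<in> P" "m \<in> C" using blk_in[OF pp] unfolding C_def by auto
  show ?thesis
  proof (cases "C \<in> set Bs")
    case False
    then show ?thesis unfolding C_def[symmetric] by auto
  next
    case True
    then obtain B0 Bs' where Bs: "Bs = B0 # Bs'" by (cases Bs) auto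
    have "C = B0"
    proof (rule ccontr)
      assume "C \<noteq> B0"
      then have "C \<in> set Bs'" using True Bs by simp
      moreover have B0P: "B0 \<in> P" using sb Bs by simp
      obtain y where y: "y \<in> B0" using part_ne[OF pp B0P] by blast
      ultimately have "m < y" using od C(2) unfolding Bs ordB_Cons by blast
      moreover have "y < Suc m" using part_lt[OF pp B0P y] .
      ultimately show False by simp
    qed
    then show ?thesis using Bs C(2) by auto
  qed
qed

lemma SS_rec:
  assumes lu: "length us = m"
  shows "sum (WW \<phi> \<Lambda> (us @ [u]) w) (NCO (Suc m) (length w)) =
     sum (WW \<phi> \<Lambda> us (u # w)) (NCO m (Suc (length w))) +
     (case w of [] \<Rightarrow> 0 | x # r \<Rightarrow> \<phi> (u * x) * sum (WW \<phi> \<Lambda> us r) (NCO m (length r))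
         + sum (WW \<phi> \<Lambda> us (\<Lambda> u x # r)) (NCO m (length w)))"
proof -
  define N where "N = NCO (Suc m) (length w)"
  define Ap where "Ap = {a\<in>N. blk m (fst a) \<notin> set (snd a) \<and> blk m (fst a) \<noteq> {m}}"
  define Az where "Az = {a\<in>N. blk m (fst a) = {m} \<and> {m} \<notin> set (snd a)}"
  define Am where "Am = {a\<in>N. snd a \<noteq> [] \<and> hd (snd a) = {m}}"
  define A0 where "A0 = {a\<in>N. snd a \<noteq> [] \<and> m \<in> hd (snd a) \<and> hd (snd a) \<noteq> {m}}"
  have finN: "finite N" unfolding N_def by (rule NCO_fin)
  have cover: "N = Ap \<union> Az \<union> Am \<union> A0"
  proof
    show "N \<subseteq> Ap \<union> Az \<union> Am \<union> A0"
    proof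
      fix a assume aN: "a \<in> N"
      obtain P Bs where ab: "a = (P, Bs)" by (cases a)
      have "(P, Bs) \<in> NCO (Suc m) (length w)" using aN unfolding ab N_def .
      from NCO_cover[OF this] show "a \<in> Ap \<union> Az \<union> Am \<union> A0"
        unfolding Ap_def Az_def Am_def A0_def using aN ab by auto
    qed
    show "Ap \<union> Az \<union> Am \<union> A0 \<subseteq> N" unfolding Ap_def Az_def Am_def A0_def by auto
  qed
  have blkfacts: "blk m P \<in> P" "m \<in> blk m P" "set Bs \<subseteq> P" "partition_on {0..<Suc m} P" if "(P, Bs) \<in> N" for P Bs
  proof -
    have pp: "partition_on {0..<Suc m} P" using that unfolding N_def NCO_iff by simp
    show "blk m P \<in> P" "m \<in> blk m P" using blk_in[OF pp] by auto
    show "set Bs \<subseteq> P" using that unfolding N_def NCO_iff by simp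
    show "partition_on {0..<Suc m} P" by (rule pp)
  qed
  have hdblk: "blk m P = hd Bs" if "(P, Bs) \<in> N" "Bs \<noteq> []" "m \<in> hd Bs" for P Bs
  proof -
    have "hd Bs \<in> P" using blkfacts(3)[OF that(1)] that(2) by (cases Bs) auto
    then show ?thesis using part_blk[OF blkfacts(4)[OF that(1)] _ that(3)] by simp
  qed
  have d1: "Ap \<inter> Az = {}" unfolding Ap_def Az_def by auto
  have d2: "(Ap \<union> Az) \<inter> Am = {}"
  proof -
    have "a \<notin> Am" if "a \<in> Ap \<union> Az" for a
    proof
      assume am: "a \<in> Am"
      obtain P Bs where ab: "a = (P, Bs)" by (cases a)
      have aN: "(P, Bs) \<in> N" and ne: "Bs \<noteq> []" and h: "hd Bs = {m}" using am unfolding ab Am_def by auto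
      have "blk m P = {m}" using hdblk[OF aN ne] h by simp
      moreover have "{m} \<in> set Bs" using ne h by (cases Bs) auto
      ultimately show False using that unfolding ab Ap_def Az_def by auto
    qed
    then show ?thesis by blast
  qed
  have d3: "(Ap \<union> Az \<union> Am) \<inter> A0 = {}"
  proof -
    have "a \<notin> A0" if "a \<in> Ap \<union> Az \<union> Am" for a
    proof
      assume a0: "a \<in> A0"
      obtain P Bs where ab: "a = (P, Bs)" by (cases a)
      have aN: "(P, Bs) \<in> N" and ne: "Bs \<noteq> []" and h: "m \<in> hd Bs" "hd Bs \<noteq> {m}" using a0 unfolding ab A0_def by auto
      have e: "blk m P = hd Bs" using hdblk[OF aN ne h(1)] .
      moreover have "hd Bs \<in> set Bs" using ne by (cases Bs) auto
      ultimately show False using that h(2) unfolding ab Ap_def Az_def Am_def by auto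
    qed
    then show ?thesis by blast
  qed
  have fins: "finite Ap" "finite Az" "finite Am" "finite A0"
    using finN unfolding Ap_def Az_def Am_def A0_def by auto
  have split: "sum (WW \<phi> \<Lambda> (us @ [u]) w) N = sum (WW \<phi> \<Lambda> (us @ [u]) w) Ap + sum (WW \<phi> \<Lambda> (us @ [u]) w) Az
      + sum (WW \<phi> \<Lambda> (us @ [u]) w) Am + sum (WW \<phi> \<Lambda> (us @ [u]) w) A0"
    unfolding cover using fins d1 d2 d3 by (simp add: sum.union_disjoint)
  have zAz: "sum (WW \<phi> \<Lambda> (us @ [u]) w) Az = 0"
  proof (rule sum.neutral, rule ballI)
    fix a assume a: "a \<in> Az"
    obtain P Bs where ab: "a = (P, Bs)" by (cases a)
    have aN: "(P, Bs) \<in> N" and h: "blk m P = {m}" "{m} \<notin> set Bs" using a unfolding ab Az_def by auto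
    have "{m} \<in> P" using blkfacts(1)[OF aN] h by simp
    show "WW \<phi> \<Lambda> (us @ [u]) w a = 0" unfolding ab
      by (rule w_zeroset[OF aN[unfolded N_def] \<open>{m} \<in> P\<close> h(2) lu])
  qed
  have sAp: "sum (WW \<phi> \<Lambda> (us @ [u]) w) Ap = sum (WW \<phi> \<Lambda> us (u # w)) (NCO m (Suc (length w)))"
  proof (rule bij_sum[where i="\<lambda>(P', Bs'). (addto m P' (hd Bs'), tl Bs')"
        and j="\<lambda>(P, Bs). (rem m P, (blk m P - {m}) # Bs)"])
    fix a assume a: "a \<in> Ap"
    obtain P Bs where ab: "a = (P, Bs)" by (cases a)
    have aN: "(P, Bs) \<in> N" and h: "blk m P \<notin> set Bs" "blk m P \<noteq> {m}" using a unfolding ab Ap_def by auto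
    show "(\<lambda>(P', Bs'). (addto m P' (hd Bs'), tl Bs')) ((\<lambda>(P, Bs). (rem m P, (blk m P - {m}) # Bs)) a) = a"
      unfolding ab using addto_rem[OF blkfacts(4)[OF aN] blkfacts(1,2)[OF aN] h(2)] by simp
    show "(\<lambda>(P, Bs). (rem m P, (blk m P - {m}) # Bs)) a \<in> NCO m (Suc (length w))"
      unfolding ab using plus_out[OF aN[unfolded N_def] h] by simp
  next
    fix b assume b: "b \<in> NCO m (Suc (length w))"
    obtain P' Bs' where ab: "b = (P', Bs')" by (cases b)
    have "length Bs' = Suc (length w)" using b unfolding ab NCO_iff by simp
    then obtain C' Bs where Bs': "Bs' = C' # Bs" by (cases Bs') auto
    have bb: "(P', C' # Bs) \<in> NCO m (Suc (length w))" using b unfolding ab Bs' .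
    have pp: "partition_on {0..<m} P'" and C': "C' \<in> P'" using bb unfolding NCO_iff by auto
    have "m \<notin> C'" by (rule part_nm[OF pp C'])
    then show "(\<lambda>(P, Bs). (rem m P, (blk m P - {m}) # Bs)) ((\<lambda>(P', Bs'). (addto m P' (hd Bs'), tl Bs')) b) = b"
      unfolding ab Bs' using rem_addto[OF pp C'] blk_addto[OF pp C'] by simp
    show "(\<lambda>(P', Bs'). (addto m P' (hd Bs'), tl Bs')) b \<in> Ap"
      unfolding ab Bs' Ap_def N_def using plus_in[OF bb] by simp
    show "WW \<phi> \<Lambda> (us @ [u]) w ((\<lambda>(P', Bs'). (addto m P' (hd Bs'), tl Bs')) b) = WW \<phi> \<Lambda> us (u # w) b"
      unfolding ab Bs' using w_plus[OF bb lu] by simp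
  qed
  show ?thesis
  proof (cases w)
    case Nil
    have "Am = {}" "A0 = {}" unfolding Am_def A0_def N_def using Nil by (auto simp: NCO_iff)
    then show ?thesis using split zAz sAp unfolding N_def using Nil by simp
  next
    case (Cons x r)
    have sAm: "sum (WW \<phi> \<Lambda> (us @ [u]) w) Am = sum (\<lambda>b. \<phi> (u * x) * WW \<phi> \<Lambda> us r b) (NCO m (length r))"
    proof (rule bij_sum[where i="\<lambda>(P', Bs). (insert {m} P', {m} # Bs)"
          and j="\<lambda>(P, Bs). (rem m P, tl Bs)"])
      fix a assume a: "a \<in> Am"
      obtain P Bs where ab: "a = (P, Bs)" by (cases a)
      have aN: "(P, Bs) \<in> N" and ne: "Bs \<noteq> []" and h: "hd Bs = {m}" using a unfolding ab Am_def by auto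
      obtain Bs' where Bs: "Bs = {m} # Bs'" using ne h by (cases Bs) auto
      have mP: "{m} \<in> P" using blkfacts(3)[OF aN] Bs by simp
      show "(\<lambda>(P', Bs). (insert {m} P', {m} # Bs)) ((\<lambda>(P, Bs). (rem m P, tl Bs)) a) = a"
        unfolding ab Bs using addsing_rem[OF blkfacts(4)[OF aN] mP] by simp
      have "(P, {m} # Bs') \<in> NCO (Suc m) (Suc (length r))" using aN unfolding N_def Bs Cons by simp
      from minus_out[OF this] show "(\<lambda>(P, Bs). (rem m P, tl Bs)) a \<in> NCO m (length r)"
        unfolding ab Bs by simp
    next
      fix b assume b: "b \<in> NCO m (length r)"
      obtain P' Bs where ab: "b = (P', Bs)" by (cases b)
      have bb: "(P', Bs) \<in> NCO m (length r)" using b unfolding ab .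
      have pp: "partition_on {0..<m} P'" using bb unfolding NCO_iff by auto
      show "(\<lambda>(P, Bs). (rem m P, tl Bs)) ((\<lambda>(P', Bs). (insert {m} P', {m} # Bs)) b) = b"
        unfolding ab using rem_addsing[OF pp] by simp
      show "(\<lambda>(P', Bs). (insert {m} P', {m} # Bs)) b \<in> Am"
        unfolding ab Am_def N_def using minus_in[OF bb] Cons by simp
      show "WW \<phi> \<Lambda> (us @ [u]) w ((\<lambda>(P', Bs). (insert {m} P', {m} # Bs)) b) = \<phi> (u * x) * WW \<phi> \<Lambda> us r b"
        unfolding ab Cons using w_minus[OF bb lu] by simp
    qed
    have sA0: "sum (WW \<phi> \<Lambda> (us @ [u]) w) A0 = sum (WW \<phi> \<Lambda> us (\<Lambda> u x # r)) (NCO m (Suc (length r)))"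
    proof (rule bij_sum[where i="\<lambda>(P', Bs'). (addto m P' (hd Bs'), insert m (hd Bs') # tl Bs')"
          and j="\<lambda>(P, Bs). (rem m P, (hd Bs - {m}) # tl Bs)"])
      fix a assume a: "a \<in> A0"
      obtain P Bs where ab: "a = (P, Bs)" by (cases a)
      have aN: "(P, Bs) \<in> N" and ne: "Bs \<noteq> []" and h: "m \<in> hd Bs" "hd Bs \<noteq> {m}" using a unfolding ab A0_def by auto
      obtain B Bs' where Bs: "Bs = B # Bs'" using ne by (cases Bs) auto
      have BP: "B \<in> P" using blkfacts(3)[OF aN] Bs by simp
      have hB: "m \<in> B" "B \<noteq> {m}" using h Bs by auto
      have "insert m (B - {m}) = B" using hB(1) by (rule insert_Diff)
      then show "(\<lambda>(P', Bs'). (addto m P' (hd Bs'), insert m (hd Bs') # tl Bs')) ((\<lambda>(P, Bs). (rem m P, (hd Bs - {m}) # tl Bs)) a) = a"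
        unfolding ab Bs using addto_rem[OF blkfacts(4)[OF aN] BP hB] by simp
      have "(P, B # Bs') \<in> NCO (Suc m) (Suc (length r))" using aN unfolding N_def Bs Cons by simp
      from zero_out[OF this hB] show "(\<lambda>(P, Bs). (rem m P, (hd Bs - {m}) # tl Bs)) a \<in> NCO m (Suc (length r))"
        unfolding ab Bs by simp
    next
      fix b assume b: "b \<in> NCO m (Suc (length r))"
      obtain P' Bs' where ab: "b = (P', Bs')" by (cases b)
      have "length Bs' = Suc (length r)" using b unfolding ab NCO_iff by simp
      then obtain B' Bs where Bs': "Bs' = B' # Bs" by (cases Bs') auto
      have bb: "(P', B' # Bs) \<in> NCO m (Suc (length r))" using b unfolding ab Bs' .
      have pp: "partition_on {0..<m} P'" and B': "B' \<in> P'" using bb unfolding NCO_iff by auto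
      have "m \<notin> B'" by (rule part_nm[OF pp B'])
      then show "(\<lambda>(P, Bs). (rem m P, (hd Bs - {m}) # tl Bs)) ((\<lambda>(P', Bs'). (addto m P' (hd Bs'), insert m (hd Bs') # tl Bs')) b) = b"
        unfolding ab Bs' using rem_addto[OF pp B'] by simp
      show "(\<lambda>(P', Bs'). (addto m P' (hd Bs'), insert m (hd Bs') # tl Bs')) b \<in> A0"
        unfolding ab Bs' A0_def N_def using zero_in[OF bb] Cons by simp
      show "WW \<phi> \<Lambda> (us @ [u]) w ((\<lambda>(P', Bs'). (addto m P' (hd Bs'), insert m (hd Bs') # tl Bs')) b) = WW \<phi> \<Lambda> us (\<Lambda> u x # r) b"
        unfolding ab Bs' Cons using w_zero[OF bb lu] by simp
    qed
    have "sum (\<lambda>b. \<phi> (u * x) * WW \<phi> \<Lambda> us r b) (NCO m (length r)) = \<phi> (u * x) * sum (WW \<phi> \<Lambda> us r) (NCO m (length r))"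
      by (simp add: sum_distrib_left)
    then show ?thesis using split zAz sAp sAm sA0 unfolding N_def using Cons by simp
  qed
qed

lemma NCO_0: "NCO 0 k = (if k = 0 then {({}, [])} else {})"
proof -
  have "(P, Bs) \<in> NCO 0 k \<longleftrightarrow> P = {} \<and> Bs = [] \<and> k = 0" for P Bs
  proof
    assume a: "(P, Bs) \<in> NCO 0 k"
    then have "partition_on {} P" "set Bs \<subseteq> P" "length Bs = k" unfolding NCO_iff by auto
    then show "P = {} \<and> Bs = [] \<and> k = 0" by (auto simp: partition_on_empty)
  next
    assume "P = {} \<and> Bs = [] \<and> k = 0"
    then show "(P, Bs) \<in> NCO 0 k" unfolding NCO_iff
      by (auto simp: partition_on_empty crossfree_def ordB_def vis_def)
  qed
  then show ?thesis by auto
qed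

lemma Mom_SS:
  assumes lf: "lin_functional \<phi>" and bl: "bilin_map \<Lambda>"
  shows "Mom \<phi> \<Lambda> us w = sum (WW \<phi> \<Lambda> us w) (NCO (length us) (length w))"
proof (induction us arbitrary: w rule: rev_induct)
  case Nil
  show ?case by (simp add: Mom_Nil NCO_0 WW_def Wc_def Wb_def)
next
  case (snoc u us)
  show ?case
  proof (cases w)
    case Nil
    then show ?thesis using SS_rec[of us "length us" \<phi> \<Lambda> u w] snoc[of "[u]"]
      by (simp add: Mom_snoc_Nil)
  next
    case (Cons x r)
    then show ?thesis using SS_rec[of us "length us" \<phi> \<Lambda> u w] snoc[of "u # x # r"] snoc[of r] snoc[of "\<Lambda> u x # r"]
      by (simp add: Mom_snoc_Cons[OF lf bl])
  qed
qed

lemma NCO_n0: "NCO n 0 = (\<lambda>P. (P, [])) ` NC n"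
proof -
  have "(P, Bs) \<in> NCO n 0 \<longleftrightarrow> Bs = [] \<and> P \<in> NC n" for P Bs
    unfolding NCO_iff NC_iff by (auto simp: ordB_def vis_def)
  then show ?thesis by auto
qed

lemma Mom_NC:
  assumes lf: "lin_functional \<phi>" and bl: "bilin_map \<Lambda>"
  shows "Mom \<phi> \<Lambda> us [] = (\<Sum>P\<in>NC (length us). \<Prod>V\<in>P. KK \<phi> \<Lambda> (sub us V))"
proof -
  have "Mom \<phi> \<Lambda> us [] = sum (WW \<phi> \<Lambda> us []) ((\<lambda>P. (P, [])) ` NC (length us))"
    using Mom_SS[OF lf bl, of us "[]"] NCO_n0 by simp
  also have "\<dots> = sum (WW \<phi> \<Lambda> us [] \<circ> (\<lambda>P. (P, []))) (NC (length us))"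
    by (rule sum.reindex) (auto simp: inj_on_def)
  also have "\<dots> = (\<Sum>P\<in>NC (length us). \<Prod>V\<in>P. KK \<phi> \<Lambda> (sub us V))"
    by (simp add: WW_def Wc_def Wb_def)
  finally show ?thesis .
qed

lemma vac_Mom: "vac_state (\<lambda>_. 0) \<phi> (op_prod (map (Xop \<phi> \<Lambda>) us)) = Mom \<phi> \<Lambda> us []"
  unfolding vac_state_def Mom_vac_and_snoc(1) by (simp add: Omega_def)

lemma NC_fin: "finite (NC n)"
proof -
  have "NC n \<subseteq> Pow (Pow {0..<n})"
  proof
    fix P assume "P \<in> NC n"
    then have pp: "partition_on {0..<n} P" by (simp add: NC_iff)
    show "P \<in> Pow (Pow {0..<n})" using part_sub[OF pp] by blast
  qed
  then show ?thesis by (rule finite_subset) simp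
qed

lemma NC_full: assumes "n > 0" shows "{{0..<n}} \<in> NC n"
  unfolding NC_iff crossfree_def using assms by (auto simp: partition_on_space)

lemma NC_small: assumes "P \<in> NC n" "P \<noteq> {{0..<n}}" "V \<in> P" shows "card V < n" "V \<noteq> {}" "V \<subseteq> {0..<n}"
proof -
  have pp: "partition_on {0..<n} P" using assms(1) unfolding NC_iff by simp
  show sub: "V \<subseteq> {0..<n}" by (rule part_sub[OF pp assms(3)])
  show ne: "V \<noteq> {}" by (rule part_ne[OF pp assms(3)])
  have "V \<noteq> {0..<n}"
  proof
    assume e: "V = {0..<n}"
    have "W = V" if W: "W \<in> P" for W
    proof -
      obtain y where y: "y \<in> W" using part_ne[OF pp W] by blast
      moreover have "y \<in> V" using part_sub[OF pp W] y e by blast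
      ultimately show ?thesis using part_disj[OF pp W assms(3)] by blast
    qed
    then have "P = {V}" using assms(3) by blast
    then show False using assms(2) e by simp
  qed
  then have "V \<subset> {0..<n}" using sub by blast
  then show "card V < n" using psubset_card_mono[of "{0..<n}" V] by simp
qed

lemma length_sub: "finite V \<Longrightarrow> length (sub us V) = card V"
  unfolding sub_def by simp

lemma sub_full: "sub us {0..<length us} = us"
  unfolding sub_def by (simp add: map_nth)

lemma sub_map: "V \<subseteq> {0..<length us} \<Longrightarrow> map (\<lambda>i. map f us ! i) (sorted_list_of_set V) = map f (sub us V)"
proof -
  assume a: "V \<subseteq> {0..<length us}"
  then have f: "finite V" using finite_subset by blast
  show ?thesis unfolding sub_def using a f by (auto simp: subset_iff)
qed

lemma R_eq:
  assumes lf: "lin_functional \<phi>" and bl: "bilin_map \<Lambda>"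
    and fc: "free_cumulants (vac_state (\<lambda>_. 0) \<phi>) R"
  shows "us \<noteq> [] \<Longrightarrow> R (map (Xop \<phi> \<Lambda>) us) = KK \<phi> \<Lambda> us"
proof (induction "length us" arbitrary: us rule: less_induct)
  case less
  define n where "n = length us"
  have n0: "n > 0" using less.prems unfolding n_def by simp
  define P0 where "P0 = {{0..<n}}"
  have P0: "P0 \<in> NC n" unfolding P0_def by (rule NC_full[OF n0])
  have fin: "finite (NC n)" by (rule NC_fin)
  let ?X = "Xop \<phi> \<Lambda>"
  let ?Ys = "map ?X us"
  have mom: "vac_state (\<lambda>_. 0) \<phi> (op_prod ?Ys) =
      (\<Sum>P\<in>NC n. \<Prod>V\<in>P. R (map (\<lambda>i. ?Ys ! i) (sorted_list_of_set V)))"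
    using fc less.prems unfolding free_cumulants_def n_def by auto
  have mom2: "vac_state (\<lambda>_. 0) \<phi> (op_prod ?Ys) = (\<Sum>P\<in>NC n. \<Prod>V\<in>P. KK \<phi> \<Lambda> (sub us V))"
    unfolding vac_Mom Mom_NC[OF lf bl] n_def ..
  have sm: "(\<Prod>V\<in>P. R (map (\<lambda>i. ?Ys ! i) (sorted_list_of_set V))) = (\<Prod>V\<in>P. KK \<phi> \<Lambda> (sub us V))"
    if "P \<in> NC n - {P0}" for P
  proof (rule prod.cong[OF refl])
    fix V assume V: "V \<in> P"
    have PP: "P \<in> NC n" "P \<noteq> {{0..<n}}" using that unfolding P0_def by auto
    have cV: "card V < n" "V \<noteq> {}" "V \<subseteq> {0..<n}" using NC_small[OF PP V] by auto
    have fV: "finite V" using cV(3) finite_subset by blast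
    have "map (\<lambda>i. ?Ys ! i) (sorted_list_of_set V) = map ?X (sub us V)"
      using sub_map[of V us ?X] cV(3) unfolding n_def by simp
    moreover have "R (map ?X (sub us V)) = KK \<phi> \<Lambda> (sub us V)"
    proof (rule less.hyps)
      show "length (sub us V) < length us" using length_sub[OF fV, of us] cV(1) unfolding n_def by simp
      show "sub us V \<noteq> []" using sub_ne[OF fV cV(2)] .
    qed
    ultimately show "R (map (\<lambda>i. ?Ys ! i) (sorted_list_of_set V)) = KK \<phi> \<Lambda> (sub us V)" by simp
  qed
  have full: "map (\<lambda>i. ?Ys ! i) (sorted_list_of_set {0..<n}) = ?Ys"
    using sub_map[of "{0..<n}" us ?X] sub_full[of us] unfolding n_def by simp
  have "(\<Sum>P\<in>NC n. \<Prod>V\<in>P. R (map (\<lambda>i. ?Ys ! i) (sorted_list_of_set V)))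
     = R ?Ys + (\<Sum>P\<in>NC n - {P0}. \<Prod>V\<in>P. KK \<phi> \<Lambda> (sub us V))"
    using sum.remove[OF fin P0, of "\<lambda>P. \<Prod>V\<in>P. R (map (\<lambda>i. ?Ys ! i) (sorted_list_of_set V))"]
      sum.cong[OF refl sm, of "NC n - {P0}"] full unfolding P0_def by simp
  moreover have "(\<Sum>P\<in>NC n. \<Prod>V\<in>P. KK \<phi> \<Lambda> (sub us V))
     = KK \<phi> \<Lambda> us + (\<Sum>P\<in>NC n - {P0}. \<Prod>V\<in>P. KK \<phi> \<Lambda> (sub us V))"
    using sum.remove[OF fin P0, of "\<lambda>P. \<Prod>V\<in>P. KK \<phi> \<Lambda> (sub us V)"] sub_full[of us]
    unfolding P0_def n_def by simp
  ultimately show ?case using mom mom2 by simp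
qed

lemma a_zero_chain: "op_prod (map (a_zero \<Lambda>) us) [(1, [y])] = [(1, [foldr \<Lambda> us y])]"
  by (induction us) (auto simp: a_zero_def lin_ext_def)

lemma rhs_eval:
  "vac_state (\<lambda>_. 0) \<phi> (op_prod ([a_minus (\<lambda>_. 0) \<phi> u1] @ map (a_zero \<Lambda>) us @ [a_plus un]))
    = \<phi> (u1 * foldr \<Lambda> us un)"
proof -
  have "a_plus un Omega = [(1, [un])]" by (simp add: a_plus_def lin_ext_def Omega_def)
  then have "op_prod ([a_minus (\<lambda>_. 0) \<phi> u1] @ map (a_zero \<Lambda>) us @ [a_plus un]) Omega
      = a_minus (\<lambda>_. 0) \<phi> u1 [(1, [foldr \<Lambda> us un])]"
    by (simp add: op_prod_append a_zero_chain)
  also have "\<dots> = [(\<phi> (u1 * foldr \<Lambda> us un), [])]" by (simp add: a_minus_def lin_ext_def)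
  finally show ?thesis unfolding vac_state_def fock_Omega by simp
qed

theorem corollary3p8:
  fixes \<phi> :: "'b::unital_star_algebra \<Rightarrow> complex"
    and \<gamma> :: "'b \<Rightarrow> 'b"
    and \<Lambda> :: "'b \<Rightarrow> 'b \<Rightarrow> 'b"
    and R :: "('b fvec \<Rightarrow> 'b fvec) list \<Rightarrow> complex"
    and u1 un :: 'b and us :: "'b list"
  assumes "star_lin_functional \<phi>"
    and "star_lin_map \<gamma>"
    and "star_bilin_map \<Lambda>"
    and "positive_functional \<phi>"
    and "faithful_functional \<phi>"
    and "completely_positive (gp \<gamma> \<phi>)"
    and "\<forall>b u v. \<phi> (adj v * \<Lambda> b u) = \<phi> (adj (\<Lambda> (adj b) v) * u)"
    and "\<forall>b u v. \<gamma> (adj v * \<Lambda> b u) = \<gamma> (adj (\<Lambda> (adj b) v) * u)"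
    and "\<gamma> = (\<lambda>_. 0)"
    and "free_cumulants (vac_state \<gamma> \<phi>) R"
  shows "R (map (field_op \<gamma> \<phi> \<Lambda>) (u1 # us @ [un])) =
         vac_state \<gamma> \<phi> (op_prod ([a_minus \<gamma> \<phi> u1] @ map (a_zero \<Lambda>) us @ [a_plus un]))"
proof -
  have lf: "lin_functional \<phi>" using assms(1) unfolding star_lin_functional_def by simp
  have bl: "bilin_map \<Lambda>" using assms(3) unfolding star_bilin_map_def by simp
  have fc: "free_cumulants (vac_state (\<lambda>_. 0) \<phi>) R" using assms(10) unfolding assms(9) .
  have "R (map (Xop \<phi> \<Lambda>) (u1 # us @ [un])) = KK \<phi> \<Lambda> (u1 # us @ [un])"
    by (rule R_eq[OF lf bl fc]) simp
  also have "\<dots> = \<phi> (u1 * foldr \<Lambda> us un)"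
    unfolding KK_def hh_def by (simp add: butlast_append)
  also have "\<dots> = vac_state (\<lambda>_. 0) \<phi> (op_prod ([a_minus (\<lambda>_. 0) \<phi> u1] @ map (a_zero \<Lambda>) us @ [a_plus un]))"
    by (rule rhs_eval[symmetric])
  finally show ?thesis unfolding assms(9) .
qed

end
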